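(* Fix $T\ge1$, $K\ge2$, $V_T>0$ and a batch size $\Delta\in\{1,\dots,T\}$; partition $\{1,\dots,T\}$ into consecutive batches $\mathcal{T}_j=\{t:(j-1)\Delta+1\le t\le\min\{j\Delta,T\}\}$, $j=1,\dots,m=\lceil T/\Delta\rceil$. Suppose a policy $\pi$ runs, in each batch, a procedure (restarted at the start of the batch) such that for every $\mu\in\mathcal{V}$ and every batch $j$, \[ \mathbb{E}\Big[\max_{k\in\mathcal{K}}\sum_{t\in\mathcal{T}_j}X_t^k\Big]-\mathbb{E}^\pi\Big[\sum_{t\in\mathcal{T}_j}\mu_t^{\pi_t}\Big]\le B. \] Then $\mathcal{R}^\pi(\mathcal{V},T)\le \lceil T/\Delta\rceil\, B+2\Delta V_T$. In particular, for Exp3 restarted every $\Delta$ epochs with $\gamma=\min\{1,\sqrt{K\log K/((e-1)\Delta)}\}$, for which $B=2\sqrt{e-1}\sqrt{\Delta K\log K}$, one gets $\mathcal{R}^\pi(\mathcal{V},T)\le \big(\tfrac{T}{\Delta}+1\big)2\sqrt{e-1}\sqrt{\Delta K\log K}+2\Delta V_T$.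
   Context: Multi-armed bandit with arms $\mathcal{K}=\{1,\dots,K\}$ and epochs $t\in\{1,\dots,T\}$; pulling arm $k$ at epoch $t$ yields reward $X_t^k\in[0,1]$ with mean $\mu_t^k$, rewards independent across epochs and of the policy's randomization; $\mu_t^*=\max_k\mu_t^k$. $\mathcal{V}=\{\mu\in[0,1]^{K\times T}:\ \sum_{t=1}^{T-1}\sup_{k}|\mu_t^k-\mu_{t+1}^k|\le V_T\}$. Regret: $\mathcal{R}^{\pi}(\mathcal{V},T)=\sup_{\mu\in\mathcal{V}}\{\sum_{t=1}^T\mu_t^*-\mathbb{E}^\pi[\sum_{t=1}^T\mu_t^{\pi_t}]\}$. Exp3 with parameter $\gamma$: starting from weights $w^k=1$, at each epoch play arm $k$ with probability $p_t^k=(1-\gamma)w_t^k/\sum_{k'}w_t^{k'}+\gamma/K$, observe the reward $X_t^{k'}$ of the played arm $k'$, set $\hat X_t^{k'}=X_t^{k'}/p_t^{k'}$, $\hat X_t^k=0$ otherwise, and update $w_{t+1}^k=w_t^k\exp\{\gamma\hat X_t^k/K\}$. *)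

theory Defs
  imports "HOL-Probability.Probability"
begin

text \<open>Arms are 1..K, epochs are 1..T. The reward vector of epoch t is a function
  on the arms with values in [0,1]; its law is a probability measure on this space.\<close>

definition rewspace :: "nat \<Rightarrow> (nat \<Rightarrow> real) measure" where
  "rewspace K = PiM {1..K} (\<lambda>_. restrict_space borel {0..1::real})"

text \<open>An environment assigns to each epoch t the law nu t of the reward vector
  (X_t^1,...,X_t^K); rewards are independent across epochs, so the joint law of the
  whole reward table is the product measure.\<close>

definition omega :: "nat \<Rightarrow> (nat \<Rightarrow> (nat \<Rightarrow> real) measure) \<Rightarrow> (nat \<Rightarrow> nat \<Rightarrow> real) measure" where
  "omega T \<nu> = PiM {1..T} \<nu>"

definition mu :: "(nat \<Rightarrow> (nat \<Rightarrow> real) measure) \<Rightarrow> nat \<Rightarrow> nat \<Rightarrow> real" where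
  "mu \<nu> t k = (\<integral>y. y k \<partial>\<nu> t)"

definition mustar :: "nat \<Rightarrow> (nat \<Rightarrow> (nat \<Rightarrow> real) measure) \<Rightarrow> nat \<Rightarrow> real" where
  "mustar K \<nu> t = Max ((\<lambda>k. mu \<nu> t k) ` {1..K})"

definition Vset :: "nat \<Rightarrow> nat \<Rightarrow> real \<Rightarrow> (nat \<Rightarrow> nat \<Rightarrow> real) set" where
  "Vset K T VT = {m. (\<forall>t\<in>{1..T}. \<forall>k\<in>{1..K}. m t k \<in> {0..1}) \<and>
      (\<Sum>t=1..T-1. Max ((\<lambda>k. \<bar>m t k - m (t+1) k\<bar>) ` {1..K})) \<le> VT}"

definition envs :: "nat \<Rightarrow> nat \<Rightarrow> real \<Rightarrow> (nat \<Rightarrow> (nat \<Rightarrow> real) measure) set" where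
  "envs K T VT = {\<nu>. (\<forall>t\<in>{1..T}. prob_space (\<nu> t) \<and> sets (\<nu> t) = sets (rewspace K))
                       \<and> mu \<nu> \<in> Vset K T VT}"

text \<open>A (randomized, non-anticipating) policy: at epoch t, given the history
  [(arm played, reward observed)] of epochs 1..t-1, it draws the arm from a pmf. \<close>

definition hist :: "(nat \<Rightarrow> nat \<Rightarrow> real) \<Rightarrow> nat list \<Rightarrow> (nat \<times> real) list" where
  "hist x as = map (\<lambda>(s, a). (a, x s a)) (zip [1..<Suc (length as)] as)"

fun play :: "(nat \<Rightarrow> (nat \<times> real) list \<Rightarrow> nat pmf) \<Rightarrow> (nat \<Rightarrow> nat \<Rightarrow> real) \<Rightarrow> nat \<Rightarrow> nat list pmf" where
  "play \<pi> x 0 = return_pmf []"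
| "play \<pi> x (Suc n) = bind_pmf (play \<pi> x n) (\<lambda>as. map_pmf (\<lambda>a. as @ [a]) (\<pi> (Suc n) (hist x as)))"

definition valid_policy :: "nat \<Rightarrow> (nat \<Rightarrow> (nat \<times> real) list \<Rightarrow> nat pmf) \<Rightarrow> bool" where
  "valid_policy K \<pi> \<longleftrightarrow> (\<forall>t h. set_pmf (\<pi> t h) \<subseteq> {1..K})"

definition policy_measurable :: "nat \<Rightarrow> (nat \<Rightarrow> (nat \<times> real) list \<Rightarrow> nat pmf)
     \<Rightarrow> (nat \<Rightarrow> (nat \<Rightarrow> real) measure) \<Rightarrow> bool" where
  "policy_measurable T \<pi> \<nu> \<longleftrightarrow>
     (\<forall>n as. (\<lambda>x. pmf (play \<pi> x n) as) \<in> borel_measurable (omega T \<nu>))"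

text \<open>E^pi [ sum_{t in S} mu_t^{pi_t} ] (arm at epoch t is as ! (t-1)).\<close>

definition pol_reward :: "nat \<Rightarrow> (nat \<Rightarrow> (nat \<times> real) list \<Rightarrow> nat pmf)
     \<Rightarrow> (nat \<Rightarrow> (nat \<Rightarrow> real) measure) \<Rightarrow> nat set \<Rightarrow> real" where
  "pol_reward T \<pi> \<nu> S = (\<integral>x. measure_pmf.expectation (play \<pi> x T)
        (\<lambda>as. \<Sum>t\<in>S. mu \<nu> t (as ! (t - 1))) \<partial>omega T \<nu>)"

definition exp_max :: "nat \<Rightarrow> nat \<Rightarrow> (nat \<Rightarrow> (nat \<Rightarrow> real) measure) \<Rightarrow> nat set \<Rightarrow> real" where
  "exp_max K T \<nu> S = (\<integral>x. Max ((\<lambda>k. \<Sum>t\<in>S. x t k) ` {1..K}) \<partial>omega T \<nu>)"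

definition regret :: "nat \<Rightarrow> nat \<Rightarrow> real \<Rightarrow> (nat \<Rightarrow> (nat \<times> real) list \<Rightarrow> nat pmf) \<Rightarrow> ereal" where
  "regret K T VT \<pi> = (SUP \<nu>\<in>envs K T VT.
      ereal ((\<Sum>t=1..T. mustar K \<nu> t) - pol_reward T \<pi> \<nu> {1..T}))"

definition batch :: "nat \<Rightarrow> nat \<Rightarrow> nat \<Rightarrow> nat set" where
  "batch \<Delta> T j = {t. (j - 1) * \<Delta> + 1 \<le> t \<and> t \<le> min (j * \<Delta>) T}"

text \<open>Exp3 with parameter gamma, restarted at the beginning of every batch of length Delta.\<close>

definition exp3_prob :: "nat \<Rightarrow> real \<Rightarrow> (nat \<Rightarrow> real) \<Rightarrow> nat \<Rightarrow> real" where
  "exp3_prob K \<gamma> w k = (1 - \<gamma>) * w k / (\<Sum>k'\<in>{1..K}. w k') + \<gamma> / real K"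

definition exp3_step :: "nat \<Rightarrow> real \<Rightarrow> (nat \<Rightarrow> real) \<Rightarrow> nat \<times> real \<Rightarrow> (nat \<Rightarrow> real)" where
  "exp3_step K \<gamma> w ar = (case ar of (a, r) \<Rightarrow>
      w(a := w a * exp (\<gamma> * (r / exp3_prob K \<gamma> w a) / real K)))"

definition exp3_weights :: "nat \<Rightarrow> real \<Rightarrow> (nat \<times> real) list \<Rightarrow> (nat \<Rightarrow> real)" where
  "exp3_weights K \<gamma> h = foldl (exp3_step K \<gamma>) (\<lambda>_. 1) h"

definition exp3_restart :: "nat \<Rightarrow> nat \<Rightarrow> real \<Rightarrow> nat \<Rightarrow> (nat \<times> real) list \<Rightarrow> nat pmf" where
  "exp3_restart K \<Delta> \<gamma> t h = embed_pmf (\<lambda>k. if k \<in> {1..K}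
      then exp3_prob K \<gamma> (exp3_weights K \<gamma> (drop (((t - 1) div \<Delta>) * \<Delta>) h)) k else 0)"

end

theory Submission
  imports Defs
begin


lemma exp3_weights_pos_gen: "(\<forall>k. 0 < w k) \<Longrightarrow> 0 < foldl (exp3_step K \<gamma>) w h k"
proof (induction h arbitrary: w)
  case Nil then show ?case by simp
next
  case (Cons a h)
  have "\<forall>k. 0 < exp3_step K \<gamma> w a k" using Cons.prems
    by (auto simp: exp3_step_def split: prod.splits)
  then show ?case using Cons.IH by simp
qed

lemma exp3_weights_pos: "0 < exp3_weights K \<gamma> h k"
  unfolding exp3_weights_def by (rule exp3_weights_pos_gen) simp

lemma exp3_prob_ge:
  assumes "\<forall>k. 0 < w k" "K \<ge> 1" "0 \<le> \<gamma>" "\<gamma> \<le> 1"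
  shows "\<gamma> / real K \<le> exp3_prob K \<gamma> w k"
proof -
  have "0 < (\<Sum>k'\<in>{1..K}. w k')" using assms by (intro sum_pos) auto
  then have "0 \<le> (1 - \<gamma>) * w k / (\<Sum>k'\<in>{1..K}. w k')" using assms
    by (intro divide_nonneg_pos mult_nonneg_nonneg) (auto simp: less_imp_le)
  then show ?thesis unfolding exp3_prob_def by simp
qed

lemma exp3_prob_sum:
  assumes "\<forall>k. 0 < w k" "K \<ge> 1"
  shows "(\<Sum>k\<in>{1..K}. exp3_prob K \<gamma> w k) = 1"
proof -
  have pos: "0 < (\<Sum>k'\<in>{1..K}. w k')" using assms by (intro sum_pos) auto
  have "(\<Sum>k\<in>{1..K}. exp3_prob K \<gamma> w k) =
        (1 - \<gamma>) * (\<Sum>k\<in>{1..K}. w k) / (\<Sum>k'\<in>{1..K}. w k') + real K * (\<gamma> / real K)"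
    unfolding exp3_prob_def sum.distrib by (simp add: sum_divide_distrib[symmetric] sum_distrib_left)
  also have "\<dots> = 1" using pos assms by (simp add: field_simps)
  finally show ?thesis .
qed

definition e3p :: "nat \<Rightarrow> nat \<Rightarrow> real \<Rightarrow> nat \<Rightarrow> (nat \<times> real) list \<Rightarrow> nat \<Rightarrow> real" where
  "e3p K \<Delta> \<gamma> t h k = (if k \<in> {1..K}
      then exp3_prob K \<gamma> (exp3_weights K \<gamma> (drop (((t - 1) div \<Delta>) * \<Delta>) h)) k else 0)"

lemma pmf_exp3_restart:
  assumes "K \<ge> 1" "0 \<le> \<gamma>" "\<gamma> \<le> 1"
  shows "pmf (exp3_restart K \<Delta> \<gamma> t h) k = e3p K \<Delta> \<gamma> t h k"
proof -
  let ?f = "e3p K \<Delta> \<gamma> t h"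
  have nn: "\<And>k. 0 \<le> ?f k"
  proof -
    fix k
    have "0 \<le> \<gamma> / real K" using assms by simp
    also have "\<dots> \<le> exp3_prob K \<gamma> (exp3_weights K \<gamma> (drop (((t - 1) div \<Delta>) * \<Delta>) h)) k"
      using exp3_prob_ge[OF _ assms] exp3_weights_pos by blast
    finally show "0 \<le> ?f k" unfolding e3p_def by simp
  qed
  have "(\<integral>\<^sup>+x. ennreal (?f x) \<partial>count_space UNIV) = (\<integral>\<^sup>+x. ennreal (?f x) * indicator {1..K} x \<partial>count_space UNIV)"
    by (intro nn_integral_cong) (auto simp: e3p_def split: split_indicator)
  also have "\<dots> = (\<integral>\<^sup>+x. ennreal (?f x) \<partial>count_space {1..K})"
    by (simp add: nn_integral_count_space_indicator)
  also have "\<dots> = (\<Sum>x\<in>{1..K}. ennreal (?f x))" by (simp add: nn_integral_count_space_finite)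
  also have "\<dots> = ennreal (\<Sum>x\<in>{1..K}. ?f x)" using nn by (simp add: sum_ennreal)
  also have "(\<Sum>x\<in>{1..K}. ?f x) = 1" unfolding e3p_def
    using exp3_prob_sum[OF _ assms(1)] exp3_weights_pos by simp
  finally have "(\<integral>\<^sup>+x. ennreal (?f x) \<partial>count_space UNIV) = 1" by simp
  then show ?thesis unfolding exp3_restart_def e3p_def[symmetric]
    using pmf_embed_pmf[of ?f] nn by simp
qed

lemma valid_exp3:
  assumes "K \<ge> 1" "0 \<le> \<gamma>" "\<gamma> \<le> 1"
  shows "valid_policy K (exp3_restart K \<Delta> \<gamma>)"
  unfolding valid_policy_def
proof (intro allI subsetI)
  fix t h k assume "k \<in> set_pmf (exp3_restart K \<Delta> \<gamma> t h)"
  then have "pmf (exp3_restart K \<Delta> \<gamma> t h) k \<noteq> 0" by (simp add: set_pmf_eq)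
  then show "k \<in> {1..K}" unfolding pmf_exp3_restart[OF assms] e3p_def by (auto split: if_splits)
qed



definition Ls :: "nat \<Rightarrow> nat \<Rightarrow> nat list set" where
  "Ls K n = {as. length as = n \<and> set as \<subseteq> {1..K}}"

lemma finite_Ls: "finite (Ls K n)"
  unfolding Ls_def using finite_lists_length_eq[of "{1..K}" n] by (simp add: conj_commute)

lemma hist_snoc: "hist x (as @ [a]) = hist x as @ [(a, x (Suc (length as)) a)]"
proof -
  have "[1..<Suc (Suc (length as))] = [1..<Suc (length as)] @ [Suc (length as)]" by simp
  then show ?thesis unfolding hist_def by (simp del: upt_Suc add: zip_append)
qed

lemma length_hist[simp]: "length (hist x as) = length as"
  unfolding hist_def by (simp del: upt_Suc)

lemma set_play:
  assumes "valid_policy K \<pi>"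
  shows "set_pmf (play \<pi> x n) \<subseteq> Ls K n"
proof (induction n)
  case 0 then show ?case by (simp add: Ls_def)
next
  case (Suc n)
  then show ?case using assms unfolding valid_policy_def Ls_def by (force simp: subset_iff)
qed

lemma Ls_Suc: "Ls K (Suc n) = (\<lambda>(as, a). as @ [a]) ` (Ls K n \<times> {1..K})"
proof
  show "Ls K (Suc n) \<subseteq> (\<lambda>(as, a). as @ [a]) ` (Ls K n \<times> {1..K})"
  proof
    fix bs assume bs: "bs \<in> Ls K (Suc n)"
    then have "bs \<noteq> []" by (auto simp: Ls_def)
    then have "bs = butlast bs @ [last bs]" by simp
    moreover have "butlast bs \<in> Ls K n" "last bs \<in> {1..K}" using bs \<open>bs \<noteq> []\<close>
      by (auto simp: Ls_def dest: in_set_butlastD) (metis last_in_set subsetD atLeastAtMost_iff)+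
    ultimately show "bs \<in> (\<lambda>(as, a). as @ [a]) ` (Ls K n \<times> {1..K})" by force
  qed
qed (auto simp: Ls_def)

lemma inj_snoc: "inj_on (\<lambda>(as, a). as @ [a]) X"
  by (auto simp: inj_on_def)

lemma pmf_play_Suc:
  "pmf (play \<pi> x (Suc n)) bs = (if bs = [] then 0 else
     pmf (play \<pi> x n) (butlast bs) * pmf (\<pi> (Suc n) (hist x (butlast bs))) (last bs))"
proof (cases "bs = []")
  case True
  have "\<And>as. pmf (map_pmf (\<lambda>a. as @ [a]) (\<pi> (Suc n) (hist x as))) [] = 0"
    by (rule pmf_map_outside) auto
  then show ?thesis using True by (simp add: pmf_bind del: pmf_map)
next
  case False
  let ?b = "butlast bs"
  have eq: "pmf (map_pmf (\<lambda>a. as @ [a]) (\<pi> (Suc n) (hist x as))) bs =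
        (if as = ?b then pmf (\<pi> (Suc n) (hist x ?b)) (last bs) else 0)" for as
  proof (cases "as = ?b")
    case True
    have "pmf (map_pmf (\<lambda>a. as @ [a]) (\<pi> (Suc n) (hist x as))) ((\<lambda>a. as @ [a]) (last bs))
          = pmf (\<pi> (Suc n) (hist x as)) (last bs)"
      by (rule pmf_map_inj') (auto simp: inj_def)
    with True False show ?thesis by simp
  next
    case F: False
    have "bs \<notin> (\<lambda>a. as @ [a]) ` set_pmf (\<pi> (Suc n) (hist x as))"
      using F by auto
    then show ?thesis using F by (simp add: pmf_map_outside)
  qed
  have "pmf (play \<pi> x (Suc n)) bs =
        (\<integral>as. (if as = ?b then pmf (\<pi> (Suc n) (hist x ?b)) (last bs) else 0) \<partial>measure_pmf (play \<pi> x n))"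
    by (simp add: pmf_bind eq del: pmf_map)
  also have "\<dots> = pmf (play \<pi> x n) ?b * pmf (\<pi> (Suc n) (hist x ?b)) (last bs)"
    by (subst integral_measure_pmf_real[of "{?b}"]) (auto split: if_splits)
  finally show ?thesis using False by simp
qed

lemma pmf_play_snoc:
  "pmf (play \<pi> x (Suc n)) (as @ [a]) = pmf (play \<pi> x n) as * pmf (\<pi> (Suc n) (hist x as)) a"
  by (subst pmf_play_Suc) simp

lemma expectation_play:
  assumes "valid_policy K \<pi>"
  shows "measure_pmf.expectation (play \<pi> x n) f = (\<Sum>as\<in>Ls K n. pmf (play \<pi> x n) as * f as)"
  using set_play[OF assms] finite_Ls
  by (subst integral_measure_pmf_real[of "Ls K n"]) (auto simp: mult.commute)

lemma sum_pmf_policy: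
  assumes "valid_policy K \<pi>"
  shows "(\<Sum>a\<in>{1..K}. pmf (\<pi> t h) a) = 1"
  using assms unfolding valid_policy_def by (intro sum_pmf_eq_1) auto

lemma sum_play_Suc:
  "(\<Sum>bs\<in>Ls K (Suc n). pmf (play \<pi> x (Suc n)) bs * f bs) =
   (\<Sum>as\<in>Ls K n. pmf (play \<pi> x n) as * (\<Sum>a\<in>{1..K}. pmf (\<pi> (Suc n) (hist x as)) a * f (as @ [a])))"
  unfolding Ls_Suc sum.reindex[OF inj_snoc] sum_distrib_left
  apply (subst sum.cartesian_product)
  apply (rule sum.cong)
  by (auto simp: pmf_play_snoc mult.assoc simp del: play.simps)

lemma sum_play_one:
  assumes "valid_policy K \<pi>"
  shows "(\<Sum>as\<in>Ls K n. pmf (play \<pi> x n) as) = 1"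
  using sum_pmf_eq_1[OF finite_Ls set_play[OF assms]] .

lemma sum_play_take:
  assumes "valid_policy K \<pi>" "m \<le> n"
  shows "(\<Sum>bs\<in>Ls K n. pmf (play \<pi> x n) bs * f (take m bs)) = (\<Sum>as\<in>Ls K m. pmf (play \<pi> x m) as * f as)"
  using assms(2)
proof (induction n)
  case 0 then show ?case by (simp add: Ls_def)
next
  case (Suc n)
  show ?case
  proof (cases "m = Suc n")
    case True
    then show ?thesis by (intro sum.cong) (auto simp: Ls_def)
  next
    case False
    then have mn: "m \<le> n" using Suc by simp
    have "(\<Sum>bs\<in>Ls K (Suc n). pmf (play \<pi> x (Suc n)) bs * f (take m bs)) =
      (\<Sum>as\<in>Ls K n. pmf (play \<pi> x n) as * (\<Sum>a\<in>{1..K}. pmf (\<pi> (Suc n) (hist x as)) a * f (take m as)))"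
      unfolding sum_play_Suc
      by (intro sum.cong refl arg_cong2[where f="(*)"] ) (auto simp: Ls_def mn)
    also have "\<dots> = (\<Sum>as\<in>Ls K n. pmf (play \<pi> x n) as * f (take m as))"
        using sum_pmf_policy[OF assms(1), simplified] by (simp add: sum_distrib_right[symmetric])
    finally show ?thesis using Suc.IH[OF mn] by simp
  qed
qed

lemma play_cong:
  "(\<And>s. s < n \<Longrightarrow> x s = y s) \<Longrightarrow> play \<pi> x n = play \<pi> y n"
proof (induction n)
  case 0 then show ?case by simp
next
  case (Suc n)
  have IH: "play \<pi> x n = play \<pi> y n" using Suc by simp
  show ?case
  proof (simp only: play.simps IH, intro bind_pmf_cong refl)
    fix as assume "as \<in> set_pmf (play \<pi> y n)"
    then have "length as = n"
      by (induction n arbitrary: as) auto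
    then have "hist x as = hist y as" using Suc.prems
      by (auto simp: hist_def set_zip nth_upt simp del: upt_Suc)
    then show "map_pmf (\<lambda>a. as @ [a]) (\<pi> (Suc n) (hist x as)) = map_pmf (\<lambda>a. as @ [a]) (\<pi> (Suc n) (hist y as))"
      by simp
  qed
qed



lemma exp_le_quad:
  fixes z :: real assumes "0 \<le> z" "z \<le> 1"
  shows "exp z \<le> 1 + z + (exp 1 - 2) * z\<^sup>2"
proof -
  have s1: "summable (\<lambda>n. inverse (fact (n + 2)) * z ^ (n + 2))"
    by (rule summable_exp [THEN summable_ignore_initial_segment])
  have s2: "summable (\<lambda>n. inverse (fact (n + 2)) * (1::real) ^ (n + 2))"
    by (rule summable_exp [THEN summable_ignore_initial_segment])
  have "(\<Sum>n. inverse (fact (n + 2)) * z ^ (n + 2)) \<le> (\<Sum>n. z\<^sup>2 * (inverse (fact (n + 2)) * (1::real) ^ (n + 2)))"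
  proof (rule suminf_le)
    fix n
    have "z ^ (n + 2) = z^n * z\<^sup>2" by (simp add: power_add power2_eq_square)
    also have "\<dots> \<le> 1 * z\<^sup>2" using assms by (intro mult_right_mono power_le_one) auto
    finally show "inverse (fact (n + 2)) * z ^ (n + 2) \<le> z\<^sup>2 * (inverse (fact (n + 2)) * (1::real) ^ (n + 2))"
      by (simp add: mult_left_mono)
  qed (use s1 s2 summable_mult in auto)
  also have "\<dots> = z\<^sup>2 * (\<Sum>n. inverse (fact (n + 2)) * (1::real) ^ (n + 2))"
    using s2 by (rule suminf_mult)
  also have "(\<Sum>n. inverse (fact (n + 2)) * (1::real) ^ (n + 2)) = exp 1 - 2"
    using exp_first_two_terms[of "1::real"] by simp
  finally show ?thesis using exp_first_two_terms[of z] by (simp add: mult.commute)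
qed

lemma sum_upd:
  fixes w :: "'a \<Rightarrow> real"
  assumes "finite A" "a \<in> A"
  shows "(\<Sum>k\<in>A. (w(a := v)) k) = (\<Sum>k\<in>A. w k) - w a + v"
proof -
  have "(\<Sum>k\<in>A. (w(a := v)) k) = (w(a := v)) a + (\<Sum>k\<in>A - {a}. (w(a := v)) k)"
    using assms by (simp add: sum.remove)
  also have "(\<Sum>k\<in>A - {a}. (w(a := v)) k) = (\<Sum>k\<in>A - {a}. w k)" by (intro sum.cong) auto
  also have "\<dots> = (\<Sum>k\<in>A. w k) - w a"
  proof -
    have "sum w A = w a + sum w (A - {a})" using assms by (rule sum.remove)
    then show ?thesis by simp
  qed
  finally show ?thesis by simp
qed

definition c1 :: "nat \<Rightarrow> real \<Rightarrow> real" where "c1 K \<gamma> = (\<gamma> / real K) / (1 - \<gamma>)"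
definition c2 :: "nat \<Rightarrow> real \<Rightarrow> real" where "c2 K \<gamma> = (exp 1 - 2) * (\<gamma> / real K)\<^sup>2 / (1 - \<gamma>)"

lemma step_bound:
  assumes g: "0 < \<gamma>" "\<gamma> < 1" and K: "K \<ge> 1" and w: "\<forall>k. 0 < w k" and a: "a \<in> {1..K}"
    and r: "0 \<le> r" "r \<le> 1"
  defines "p \<equiv> exp3_prob K \<gamma> w a"
  shows "(\<Sum>k\<in>{1..K}. exp3_step K \<gamma> w (a, r) k) \<le>
         (\<Sum>k\<in>{1..K}. w k) * (1 + c1 K \<gamma> * r + c2 K \<gamma> * r / p)"
proof -
  define S where "S = (\<Sum>k\<in>{1..K}. w k)"
  define z where "z = \<gamma> * (r / p) / real K"
  have Spos: "0 < S" unfolding S_def using w K by (intro sum_pos) auto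
  have waS: "w a \<le> S" unfolding S_def using a w by (intro member_le_sum) (auto simp: less_imp_le)
  have pge: "\<gamma> / real K \<le> p" unfolding p_def using exp3_prob_ge[OF w K] g by auto
  have Kpos: "0 < real K" using K by simp
  have gK: "0 < \<gamma> / real K" using g Kpos by simp
  have ppos: "0 < p" using pge gK by linarith
  have z0: "0 \<le> z" unfolding z_def using g r ppos Kpos by simp
  have "z = (\<gamma> / real K) * r / p" unfolding z_def by (simp add: field_simps)
  also have "\<dots> \<le> p * 1 / p" using pge r gK by (intro divide_right_mono mult_mono) auto
  finally have z1: "z \<le> 1" using ppos by simp
  have sumeq: "(\<Sum>k\<in>{1..K}. exp3_step K \<gamma> w (a, r) k) = S - w a + w a * exp z"
  proof -
    have "exp3_step K \<gamma> w (a, r) = w(a := w a * exp z)" unfolding exp3_step_def z_def p_def by simp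
    then show ?thesis unfolding S_def using a by (simp add: sum_upd del: fun_upd_apply)
  qed
  have peq: "p = (1 - \<gamma>) * (w a / S) + \<gamma> / real K"
    unfolding p_def exp3_prob_def S_def by simp
  have q: "w a \<le> S * p / (1 - \<gamma>)"
  proof -
    have "(1 - \<gamma>) * (w a / S) \<le> p" using peq gK by linarith
    then have "(1 - \<gamma>) * w a \<le> S * p" using Spos by (simp add: field_simps)
    then show ?thesis using g by (simp add: field_simps)
  qed
  have E: "exp z - 1 \<le> z + (exp 1 - 2) * z\<^sup>2" using exp_le_quad[OF z0 z1] by simp
  have e2: "0 \<le> exp 1 - (2::real)" using exp_ge_add_one_self[of 1] by simp
  have zz: "0 \<le> z + (exp 1 - 2) * z\<^sup>2" using z0 e2 by simp
  have "w a * (exp z - 1) \<le> w a * (z + (exp 1 - 2) * z\<^sup>2)"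
    using E w by (intro mult_left_mono) (auto simp: less_imp_le)
  also have "\<dots> \<le> S * p / (1 - \<gamma>) * (z + (exp 1 - 2) * z\<^sup>2)"
    using q zz by (intro mult_right_mono) auto
  also have "\<dots> = S / (1 - \<gamma>) * (p * z + (exp 1 - 2) * (p * z) * z)"
    by (simp add: field_simps power2_eq_square)
  finally have m1: "w a * (exp z - 1) \<le> S / (1 - \<gamma>) * (p * z + (exp 1 - 2) * (p * z) * z)" .
  have m2: "p * z = (\<gamma> / real K) * r" unfolding z_def using ppos by (simp add: field_simps)
  have "(exp 1 - 2) * ((\<gamma> / real K) * r) * z = (exp 1 - 2) * (\<gamma> / real K)\<^sup>2 * (r * r / p)"
    unfolding z_def using ppos by (simp add: field_simps power2_eq_square)
  also have "\<dots> \<le> (exp 1 - 2) * (\<gamma> / real K)\<^sup>2 * (r / p)"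
  proof (intro mult_left_mono divide_right_mono)
    show "r * r \<le> r" using r by (simp add: mult_left_le)
  qed (use e2 ppos in auto)
  finally have m3: "(exp 1 - 2) * (p * z) * z \<le> (exp 1 - 2) * (\<gamma> / real K)\<^sup>2 * (r / p)"
    using m2 by simp
  have Sg: "0 \<le> S / (1 - \<gamma>)" using Spos g by simp
  have main: "w a * (exp z - 1) \<le> S / (1 - \<gamma>) * ((\<gamma> / real K) * r + (exp 1 - 2) * (\<gamma> / real K)\<^sup>2 * (r / p))"
    using m1 mult_left_mono[OF add_left_mono[OF m3] Sg, of "p * z"] m2 by simp
  have "S / (1 - \<gamma>) * ((\<gamma> / real K) * r + (exp 1 - 2) * (\<gamma> / real K)\<^sup>2 * (r / p))
      = S * (c1 K \<gamma> * r + c2 K \<gamma> * r / p)"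
  proof -
    have gen: "S / d * (u * r + E * u\<^sup>2 * (r / p)) = S * (u / d * r + E * u\<^sup>2 / d * r / p)"
      for d u E :: real by (simp add: algebra_simps)
    show ?thesis unfolding c1_def c2_def by (rule gen)
  qed
  then show ?thesis using main sumeq unfolding S_def[symmetric] by (simp add: algebra_simps)
qed



definition Wt :: "nat \<Rightarrow> real \<Rightarrow> nat \<Rightarrow> (nat \<Rightarrow> nat \<Rightarrow> real) \<Rightarrow> nat list \<Rightarrow> nat \<Rightarrow> real" where
  "Wt K \<gamma> s0 x cs = exp3_weights K \<gamma> (drop s0 (hist x cs))"

definition pt :: "nat \<Rightarrow> real \<Rightarrow> nat \<Rightarrow> (nat \<Rightarrow> nat \<Rightarrow> real) \<Rightarrow> nat list \<Rightarrow> nat \<Rightarrow> real" where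
  "pt K \<gamma> s0 x cs t = exp3_prob K \<gamma> (Wt K \<gamma> s0 x (take (t - 1) cs)) (cs ! (t - 1))"

lemma Wt_snoc:
  assumes "s0 \<le> length as"
  shows "Wt K \<gamma> s0 x (as @ [a]) = exp3_step K \<gamma> (Wt K \<gamma> s0 x as) (a, x (Suc (length as)) a)"
  using assms unfolding Wt_def exp3_weights_def by (simp add: hist_snoc)

lemma pt_snoc:
  assumes "1 \<le> t" "t \<le> length as"
  shows "pt K \<gamma> s0 x (as @ [a]) t = pt K \<gamma> s0 x as t"
proof -
  have h: "t - 1 < length as" using assms by linarith
  then show ?thesis unfolding pt_def by (simp add: nth_append)
qed

lemma pt_snoc_last:
  "pt K \<gamma> s0 x (as @ [a]) (Suc (length as)) = exp3_prob K \<gamma> (Wt K \<gamma> s0 x as) a"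
  unfolding pt_def by simp

lemma Wt_pos: "0 < Wt K \<gamma> s0 x cs k"
  unfolding Wt_def by (rule exp3_weights_pos)

lemma pt_pos:
  assumes "0 < \<gamma>" "\<gamma> \<le> 1" "K \<ge> 1"
  shows "0 < pt K \<gamma> s0 x cs t"
proof -
  have "0 < \<gamma> / real K" using assms by simp
  also have "\<dots> \<le> pt K \<gamma> s0 x cs t" unfolding pt_def
    using exp3_prob_ge[of _ K \<gamma>] Wt_pos assms by auto
  finally show ?thesis .
qed

lemma path_bound:
  assumes g: "0 < \<gamma>" "\<gamma> < 1" and K: "K \<ge> 1"
    and x: "\<And>t k. t \<in> {s0+1..s0+m} \<Longrightarrow> k \<in> {1..K} \<Longrightarrow> 0 \<le> x t k \<and> x t k \<le> 1"
    and cs: "cs \<in> Ls K (s0 + m)"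
  shows "ln (\<Sum>k\<in>{1..K}. Wt K \<gamma> s0 x cs k) \<le> ln (real K) +
           (\<Sum>t\<in>{s0+1..s0+m}. c1 K \<gamma> * x t (cs ! (t - 1)) + c2 K \<gamma> * x t (cs ! (t - 1)) / pt K \<gamma> s0 x cs t)
      \<and> (\<forall>j. Wt K \<gamma> s0 x cs j = exp (\<gamma> / real K *
           (\<Sum>t\<in>{s0+1..s0+m}. if cs ! (t - 1) = j then x t j / pt K \<gamma> s0 x cs t else 0)))"
  using x cs
proof (induction m arbitrary: cs)
  case 0
  then have "length cs = s0" by (simp add: Ls_def)
  then have "Wt K \<gamma> s0 x cs = (\<lambda>_. 1)" unfolding Wt_def exp3_weights_def by simp
  then show ?case by simp
next
  case (Suc m)
  from Suc.prems(2) have "cs \<in> (\<lambda>(as, a). as @ [a]) ` (Ls K (s0 + m) \<times> {1..K})"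
    by (simp add: Ls_Suc)
  then obtain as a where cs: "cs = as @ [a]" and as: "as \<in> Ls K (s0 + m)" and a: "a \<in> {1..K}"
    by auto
  have las: "length as = s0 + m" using as by (simp add: Ls_def)
  have IH: "ln (\<Sum>k\<in>{1..K}. Wt K \<gamma> s0 x as k) \<le> ln (real K) +
           (\<Sum>t\<in>{s0+1..s0+m}. c1 K \<gamma> * x t (as ! (t - 1)) + c2 K \<gamma> * x t (as ! (t - 1)) / pt K \<gamma> s0 x as t)"
    "\<forall>j. Wt K \<gamma> s0 x as j = exp (\<gamma> / real K *
           (\<Sum>t\<in>{s0+1..s0+m}. if as ! (t - 1) = j then x t j / pt K \<gamma> s0 x as t else 0))"
    using Suc.IH[OF _ as] Suc.prems(1) by auto
  define t0 where "t0 = Suc (s0 + m)"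
  define r where "r = x t0 a"
  define p where "p = exp3_prob K \<gamma> (Wt K \<gamma> s0 x as) a"
  have r01: "0 \<le> r" "r \<le> 1" using Suc.prems(1)[of t0 a] a unfolding r_def t0_def by auto
  have ppos: "0 < p" unfolding p_def using pt_pos[OF g(1) _ K, of s0 x "as @ [a]" "Suc (length as)"] g
    by (simp add: pt_snoc_last)
  have ptl: "pt K \<gamma> s0 x cs t0 = p" unfolding cs p_def t0_def las[symmetric] pt_snoc_last ..
  have nthl: "cs ! (t0 - 1) = a" unfolding cs t0_def using las by (simp add: nth_append)
  have old: "\<And>t. t \<in> {s0+1..s0+m} \<Longrightarrow> pt K \<gamma> s0 x cs t = pt K \<gamma> s0 x as t \<and> cs ! (t - 1) = as ! (t - 1)"
    unfolding cs using las by (auto simp: pt_snoc nth_append)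
  have split: "(\<Sum>t\<in>{s0+1..s0+Suc m}. f t) = (\<Sum>t\<in>{s0+1..s0+m}. f t) + f t0" for f :: "nat \<Rightarrow> real"
    unfolding t0_def by (simp add: sum.cl_ivl_Suc)
  have Wcs: "Wt K \<gamma> s0 x cs = exp3_step K \<gamma> (Wt K \<gamma> s0 x as) (a, r)"
    unfolding cs r_def t0_def using las by (simp add: Wt_snoc)
  have c1p: "0 \<le> c1 K \<gamma>" "0 \<le> c2 K \<gamma>" unfolding c1_def c2_def
    using g exp_ge_add_one_self[of "1::real"] by auto
  define y where "y = c1 K \<gamma> * r + c2 K \<gamma> * r / p"
  have y0: "0 \<le> y" unfolding y_def using c1p r01 ppos by simp
  have Spos: "0 < (\<Sum>k\<in>{1..K}. Wt K \<gamma> s0 x as k)" using K Wt_pos by (intro sum_pos) auto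
  have "ln (\<Sum>k\<in>{1..K}. Wt K \<gamma> s0 x cs k) \<le> ln ((\<Sum>k\<in>{1..K}. Wt K \<gamma> s0 x as k) * (1 + y))"
  proof (rule ln_mono)
    show "0 < (\<Sum>k\<in>{1..K}. Wt K \<gamma> s0 x cs k)" using K Wt_pos by (intro sum_pos) auto
    show "(\<Sum>k\<in>{1..K}. Wt K \<gamma> s0 x cs k) \<le> (\<Sum>k\<in>{1..K}. Wt K \<gamma> s0 x as k) * (1 + y)"
      unfolding Wcs y_def p_def using step_bound[OF g K _ a r01, of "Wt K \<gamma> s0 x as"] Wt_pos
      by (simp add: add.assoc)
  qed
  also have "\<dots> = ln (\<Sum>k\<in>{1..K}. Wt K \<gamma> s0 x as k) + ln (1 + y)"
    using Spos y0 by (simp add: ln_mult)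
  also have "\<dots> \<le> ln (\<Sum>k\<in>{1..K}. Wt K \<gamma> s0 x as k) + y"
    using ln_add_one_self_le_self[OF y0] by simp
  also have "\<dots> \<le> ln (real K) +
           (\<Sum>t\<in>{s0+1..s0+m}. c1 K \<gamma> * x t (as ! (t - 1)) + c2 K \<gamma> * x t (as ! (t - 1)) / pt K \<gamma> s0 x as t) + y"
    using IH(1) by simp
  also have "(\<Sum>t\<in>{s0+1..s0+m}. c1 K \<gamma> * x t (as ! (t - 1)) + c2 K \<gamma> * x t (as ! (t - 1)) / pt K \<gamma> s0 x as t)
     = (\<Sum>t\<in>{s0+1..s0+m}. c1 K \<gamma> * x t (cs ! (t - 1)) + c2 K \<gamma> * x t (cs ! (t - 1)) / pt K \<gamma> s0 x cs t)"
    using old by (intro sum.cong) auto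
  finally have U: "ln (\<Sum>k\<in>{1..K}. Wt K \<gamma> s0 x cs k) \<le> ln (real K) +
           (\<Sum>t\<in>{s0+1..s0+Suc m}. c1 K \<gamma> * x t (cs ! (t - 1)) + c2 K \<gamma> * x t (cs ! (t - 1)) / pt K \<gamma> s0 x cs t)"
    unfolding split y_def ptl nthl r_def by simp
  have L: "Wt K \<gamma> s0 x cs j = exp (\<gamma> / real K *
           (\<Sum>t\<in>{s0+1..s0+Suc m}. if cs ! (t - 1) = j then x t j / pt K \<gamma> s0 x cs t else 0))" for j
  proof -
    have eqs: "(\<Sum>t\<in>{s0+1..s0+m}. if cs ! (t - 1) = j then x t j / pt K \<gamma> s0 x cs t else 0)
      = (\<Sum>t\<in>{s0+1..s0+m}. if as ! (t - 1) = j then x t j / pt K \<gamma> s0 x as t else 0)"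
      using old by (intro sum.cong) auto
    show ?thesis
      unfolding split eqs ptl nthl Wcs exp3_step_def
      using IH(2) by (auto simp: r_def p_def distrib_left exp_add)
  qed
  show ?case using U L by blast
qed



lemma div_batch:
  fixes \<Delta> s0 j t :: nat
  assumes "\<Delta> \<ge> 1" "s0 = (j - 1) * \<Delta>" "s0 < t" "t \<le> s0 + \<Delta>"
  shows "(t - 1) div \<Delta> * \<Delta> = s0"
proof -
  have s: "\<Delta> * (j - 1) = s0" using mult.commute[of \<Delta> "j - 1"] assms(2) by simp
  have a1: "\<Delta> * (j - 1) \<le> t - 1" using assms s by linarith
  have a2: "t - 1 < \<Delta> * Suc (j - 1)" using assms by (simp add: mult.commute algebra_simps)
  have "(t - 1) div \<Delta> = j - 1" using div_nat_eqI[OF a1 a2] .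
  then show ?thesis using assms by simp
qed

lemma pmf_exp3_batch:
  assumes K: "K \<ge> 1" and g: "0 \<le> \<gamma>" "\<gamma> \<le> 1" and D: "\<Delta> \<ge> 1" "s0 = (j - 1) * \<Delta>"
    and t: "s0 < t" "t \<le> s0 + \<Delta>" and cs: "length cs = t - 1"
  shows "pmf (exp3_restart K \<Delta> \<gamma> t (hist x cs)) a =
           (if a \<in> {1..K} then exp3_prob K \<gamma> (Wt K \<gamma> s0 x cs) a else 0)"
  unfolding pmf_exp3_restart[OF K g] e3p_def Wt_def div_batch[OF D t] ..

lemma exp_step:
  assumes K: "K \<ge> 1" and g: "0 \<le> \<gamma>" "\<gamma> \<le> 1" and D: "\<Delta> \<ge> 1" "s0 = (j - 1) * \<Delta>"
    and t: "s0 < t" "t \<le> s0 + \<Delta>" "t \<le> N"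
  shows "(\<Sum>bs\<in>Ls K N. pmf (play (exp3_restart K \<Delta> \<gamma>) x N) bs *
            G (Wt K \<gamma> s0 x (take (t - 1) bs)) (bs ! (t - 1))) =
         (\<Sum>as\<in>Ls K (t - 1). pmf (play (exp3_restart K \<Delta> \<gamma>) x (t - 1)) as *
            (\<Sum>a\<in>{1..K}. exp3_prob K \<gamma> (Wt K \<gamma> s0 x as) a * G (Wt K \<gamma> s0 x as) a))"
proof -
  let ?\<pi> = "exp3_restart K \<Delta> \<gamma>"
  have v: "valid_policy K ?\<pi>" by (rule valid_exp3[OF K g])
  define f where "f cs = G (Wt K \<gamma> s0 x (take (t - 1) cs)) (cs ! (t - 1))" for cs
  have "(\<Sum>bs\<in>Ls K N. pmf (play ?\<pi> x N) bs * G (Wt K \<gamma> s0 x (take (t - 1) bs)) (bs ! (t - 1)))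
      = (\<Sum>bs\<in>Ls K N. pmf (play ?\<pi> x N) bs * f (take t bs))"
    using t by (intro sum.cong refl) (auto simp: f_def Ls_def min_def)
  also have "\<dots> = (\<Sum>cs\<in>Ls K t. pmf (play ?\<pi> x t) cs * f cs)"
    by (rule sum_play_take[OF v t(3)])
  also have "(\<Sum>cs\<in>Ls K t. pmf (play ?\<pi> x t) cs * f cs) =
     (\<Sum>as\<in>Ls K (t - 1). pmf (play ?\<pi> x (t - 1)) as *
        (\<Sum>a\<in>{1..K}. pmf (?\<pi> t (hist x as)) a * f (as @ [a])))"
  proof -
    have tt: "Suc (t - 1) = t" using t by simp
    show ?thesis using sum_play_Suc[where n="t - 1" and \<pi>="?\<pi>" and x=x and f=f and K=K] unfolding tt .
  qed
  also have "\<dots> = (\<Sum>as\<in>Ls K (t - 1). pmf (play ?\<pi> x (t - 1)) as *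
            (\<Sum>a\<in>{1..K}. exp3_prob K \<gamma> (Wt K \<gamma> s0 x as) a * G (Wt K \<gamma> s0 x as) a))"
  proof -
    have eq: "pmf (?\<pi> t (hist x as)) a * f (as @ [a]) =
               exp3_prob K \<gamma> (Wt K \<gamma> s0 x as) a * G (Wt K \<gamma> s0 x as) a"
     if as: "as \<in> Ls K (t - 1)" and a: "a \<in> {1..K}" for as a
    proof -
    have l: "length as = t - 1" using as by (simp add: Ls_def)
    show "pmf (?\<pi> t (hist x as)) a * f (as @ [a]) =
               exp3_prob K \<gamma> (Wt K \<gamma> s0 x as) a * G (Wt K \<gamma> s0 x as) a"
      using pmf_exp3_batch[OF K g D t(1,2) l, of x a] a l nth_append_length[of as a]
      by (simp add: f_def)
    qed
    show ?thesis
    proof (rule sum.cong[OF refl], rule arg_cong2[where f="(*)"], rule refl, rule sum.cong[OF refl])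
      fix as a assume "as \<in> Ls K (t - 1)" "a \<in> {1..K}"
      then show "pmf (?\<pi> t (hist x as)) a * f (as @ [a]) =
               exp3_prob K \<gamma> (Wt K \<gamma> s0 x as) a * G (Wt K \<gamma> s0 x as) a" by (rule eq)
    qed
  qed
  finally show ?thesis .
qed

lemma prob_pos:
  assumes "K \<ge> 1" "0 < \<gamma>" "\<gamma> \<le> 1"
  shows "0 < exp3_prob K \<gamma> (Wt K \<gamma> s0 x as) a"
proof -
  have "0 < \<gamma> / real K" using assms by simp
  also have "\<dots> \<le> exp3_prob K \<gamma> (Wt K \<gamma> s0 x as) a"
    using exp3_prob_ge[of "Wt K \<gamma> s0 x as" K \<gamma> a] Wt_pos assms by auto
  finally show ?thesis .
qed

lemma sum_prob_G1:
  assumes "K \<ge> 1" "0 < \<gamma>" "\<gamma> \<le> 1"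
  shows "(\<Sum>a\<in>{1..K}. exp3_prob K \<gamma> (Wt K \<gamma> s0 x as) a * (x t a / exp3_prob K \<gamma> (Wt K \<gamma> s0 x as) a))
        = (\<Sum>a\<in>{1..K}. x t a)"
  using prob_pos[OF assms] by (intro sum.cong) (auto simp: less_imp_neq[symmetric])

lemma sum_prob_G2:
  assumes "K \<ge> 1" "0 < \<gamma>" "\<gamma> \<le> 1" "j \<in> {1..K}"
  shows "(\<Sum>a\<in>{1..K}. exp3_prob K \<gamma> (Wt K \<gamma> s0 x as) a *
            (if a = j then x t j / exp3_prob K \<gamma> (Wt K \<gamma> s0 x as) a else 0)) = x t j"
proof -
  have "(\<Sum>a\<in>{1..K}. exp3_prob K \<gamma> (Wt K \<gamma> s0 x as) a *
            (if a = j then x t j / exp3_prob K \<gamma> (Wt K \<gamma> s0 x as) a else 0)) =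
        (\<Sum>a\<in>{1..K}. if a = j then x t j else 0)"
    using prob_pos[OF assms(1-3)] by (intro sum.cong) (auto simp: less_imp_neq[symmetric])
  also have "\<dots> = x t j" using assms(4) by simp
  finally show ?thesis .
qed



lemma pt_take:
  assumes "1 \<le> t" "t \<le> e" "e \<le> length bs"
  shows "pt K \<gamma> s0 x (take e bs) t = pt K \<gamma> s0 x bs t"
proof -
  have h: "t - 1 < e" "t - 1 \<le> e" using assms by auto
  then show ?thesis using assms unfolding pt_def by (simp add: min_def)
qed

lemma batch_ineq:
  assumes K: "K \<ge> 1" and g: "0 < \<gamma>" "\<gamma> < 1" and D: "\<Delta> \<ge> 1" "s0 = (j - 1) * \<Delta>"
    and e: "s0 \<le> e" "e \<le> s0 + \<Delta>" "e \<le> N"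
    and x: "\<And>t k. t \<in> {s0+1..e} \<Longrightarrow> k \<in> {1..K} \<Longrightarrow> 0 \<le> x t k \<and> x t k \<le> 1"
    and i: "i \<in> {1..K}"
  shows "\<gamma> / real K * (\<Sum>t\<in>{s0+1..e}. x t i) \<le> ln (real K)
     + c1 K \<gamma> * (\<Sum>bs\<in>Ls K N. pmf (play (exp3_restart K \<Delta> \<gamma>) x N) bs * (\<Sum>t\<in>{s0+1..e}. x t (bs ! (t - 1))))
     + c2 K \<gamma> * (\<Sum>t\<in>{s0+1..e}. \<Sum>k\<in>{1..K}. x t k)"
proof -
  let ?\<pi> = "exp3_restart K \<Delta> \<gamma>"
  let ?P = "\<lambda>bs. pmf (play ?\<pi> x N) bs"
  have g1: "0 \<le> \<gamma>" "\<gamma> \<le> 1" using g by auto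
  have v: "valid_policy K ?\<pi>" by (rule valid_exp3[OF K g1])
  define XH where "XH bs = (\<Sum>t\<in>{s0+1..e}. if bs ! (t - 1) = i then x t i / pt K \<gamma> s0 x bs t else 0)" for bs
  define RH where "RH bs = (\<Sum>t\<in>{s0+1..e}. c1 K \<gamma> * x t (bs ! (t - 1)) + c2 K \<gamma> * x t (bs ! (t - 1)) / pt K \<gamma> s0 x bs t)" for bs
  have me: "s0 + (e - s0) = e" using e by simp
  have path: "\<gamma> / real K * XH bs \<le> ln (real K) + RH bs" if bs: "bs \<in> Ls K N" for bs
  proof -
    let ?cs = "take e bs"
    have lb: "length bs = N" using bs by (simp add: Ls_def)
    have cs: "?cs \<in> Ls K (s0 + (e - s0))" using bs e unfolding me by (auto simp: Ls_def dest: in_set_takeD)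
    have x': "\<And>t k. t \<in> {s0+1..s0 + (e - s0)} \<Longrightarrow> k \<in> {1..K} \<Longrightarrow> 0 \<le> x t k \<and> x t k \<le> 1"
      using x unfolding me by blast
    have pb: "ln (\<Sum>k\<in>{1..K}. Wt K \<gamma> s0 x ?cs k) \<le> ln (real K) +
           (\<Sum>t\<in>{s0+1..e}. c1 K \<gamma> * x t (?cs ! (t - 1)) + c2 K \<gamma> * x t (?cs ! (t - 1)) / pt K \<gamma> s0 x ?cs t)
      \<and> (\<forall>j. Wt K \<gamma> s0 x ?cs j = exp (\<gamma> / real K *
           (\<Sum>t\<in>{s0+1..e}. if ?cs ! (t - 1) = j then x t j / pt K \<gamma> s0 x ?cs t else 0)))"
      using path_bound[OF g K x' cs] unfolding me .
    have same: "pt K \<gamma> s0 x ?cs t = pt K \<gamma> s0 x bs t \<and> ?cs ! (t - 1) = bs ! (t - 1)" if "t \<in> {s0+1..e}" for t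
      using that e lb pt_take[of t e bs K \<gamma> s0 x] by auto
    have XHeq: "XH bs = (\<Sum>t\<in>{s0+1..e}. if ?cs ! (t - 1) = i then x t i / pt K \<gamma> s0 x ?cs t else 0)"
      unfolding XH_def using same by (intro sum.cong) auto
    have RHeq: "RH bs = (\<Sum>t\<in>{s0+1..e}. c1 K \<gamma> * x t (?cs ! (t - 1)) + c2 K \<gamma> * x t (?cs ! (t - 1)) / pt K \<gamma> s0 x ?cs t)"
      unfolding RH_def using same by (intro sum.cong) auto
    have "\<gamma> / real K * XH bs = ln (Wt K \<gamma> s0 x ?cs i)" using pb XHeq by simp
    also have "\<dots> \<le> ln (\<Sum>k\<in>{1..K}. Wt K \<gamma> s0 x ?cs k)"
      using Wt_pos i by (intro ln_mono member_le_sum) (auto simp: less_imp_le)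
    also have "\<dots> \<le> ln (real K) + RH bs" using conjunct1[OF pb] RHeq by simp
    finally show ?thesis .
  qed
  have "(\<Sum>bs\<in>Ls K N. ?P bs * (\<gamma> / real K * XH bs)) \<le> (\<Sum>bs\<in>Ls K N. ?P bs * (ln (real K) + RH bs))"
    using path by (intro sum_mono mult_left_mono) auto
  also have "(\<Sum>bs\<in>Ls K N. ?P bs * (\<gamma> / real K * XH bs)) = \<gamma> / real K * (\<Sum>t\<in>{s0+1..e}. x t i)"
  proof -
    have "(\<Sum>bs\<in>Ls K N. ?P bs * (\<gamma> / real K * XH bs)) =
          \<gamma> / real K * (\<Sum>t\<in>{s0+1..e}. \<Sum>bs\<in>Ls K N. ?P bs * (if bs ! (t - 1) = i then x t i / pt K \<gamma> s0 x bs t else 0))"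
    proof -
      have "(\<Sum>bs\<in>Ls K N. ?P bs * (\<gamma> / real K * XH bs)) = \<gamma> / real K * (\<Sum>bs\<in>Ls K N. ?P bs * XH bs)"
        by (simp add: sum_distrib_left mult.left_commute)
      also have "(\<Sum>bs\<in>Ls K N. ?P bs * XH bs) = (\<Sum>bs\<in>Ls K N. \<Sum>t\<in>{s0+1..e}. ?P bs * (if bs ! (t - 1) = i then x t i / pt K \<gamma> s0 x bs t else 0))"
        unfolding XH_def by (simp add: sum_distrib_left)
      also have "\<dots> = (\<Sum>t\<in>{s0+1..e}. \<Sum>bs\<in>Ls K N. ?P bs * (if bs ! (t - 1) = i then x t i / pt K \<gamma> s0 x bs t else 0))"
        by (rule sum.swap)
      finally show ?thesis .
    qed
    also have "(\<Sum>t\<in>{s0+1..e}. \<Sum>bs\<in>Ls K N. ?P bs * (if bs ! (t - 1) = i then x t i / pt K \<gamma> s0 x bs t else 0))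
       = (\<Sum>t\<in>{s0+1..e}. x t i)"
    proof (rule sum.cong[OF refl])
      fix t assume t: "t \<in> {s0+1..e}"
      have "(\<Sum>bs\<in>Ls K N. ?P bs * (if bs ! (t - 1) = i then x t i / pt K \<gamma> s0 x bs t else 0))
        = (\<Sum>as\<in>Ls K (t - 1). pmf (play ?\<pi> x (t - 1)) as *
            (\<Sum>a\<in>{1..K}. exp3_prob K \<gamma> (Wt K \<gamma> s0 x as) a *
               (if a = i then x t i / exp3_prob K \<gamma> (Wt K \<gamma> s0 x as) a else 0)))"
        using exp_step[where t=t and N=N and G="\<lambda>w a. if a = i then x t i / exp3_prob K \<gamma> w a else 0" and x=x, OF K g1 D] t e
        unfolding pt_def by simp
      also have "\<dots> = (\<Sum>as\<in>Ls K (t - 1). pmf (play ?\<pi> x (t - 1)) as * x t i)"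
        using sum_prob_G2[OF K g(1) g1(2) i] by simp
      also have "\<dots> = x t i" using sum_play_one[OF v] by (simp add: sum_distrib_right[symmetric])
      finally show "(\<Sum>bs\<in>Ls K N. ?P bs * (if bs ! (t - 1) = i then x t i / pt K \<gamma> s0 x bs t else 0)) = x t i" .
    qed
    finally show ?thesis .
  qed
  also have "(\<Sum>bs\<in>Ls K N. ?P bs * (ln (real K) + RH bs)) = ln (real K)
     + c1 K \<gamma> * (\<Sum>bs\<in>Ls K N. ?P bs * (\<Sum>t\<in>{s0+1..e}. x t (bs ! (t - 1))))
     + c2 K \<gamma> * (\<Sum>t\<in>{s0+1..e}. \<Sum>k\<in>{1..K}. x t k)"
  proof -
    have "(\<Sum>bs\<in>Ls K N. ?P bs * (ln (real K) + RH bs)) = ln (real K) * (\<Sum>bs\<in>Ls K N. ?P bs)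
      + c1 K \<gamma> * (\<Sum>bs\<in>Ls K N. ?P bs * (\<Sum>t\<in>{s0+1..e}. x t (bs ! (t - 1))))
      + c2 K \<gamma> * (\<Sum>t\<in>{s0+1..e}. \<Sum>bs\<in>Ls K N. ?P bs * (x t (bs ! (t - 1)) / pt K \<gamma> s0 x bs t))"
    proof -
      have "(\<Sum>bs\<in>Ls K N. ?P bs * (ln (real K) + RH bs)) = ln (real K) * (\<Sum>bs\<in>Ls K N. ?P bs)
        + (\<Sum>bs\<in>Ls K N. \<Sum>t\<in>{s0+1..e}. c1 K \<gamma> * (?P bs * x t (bs ! (t - 1))))
        + (\<Sum>bs\<in>Ls K N. \<Sum>t\<in>{s0+1..e}. c2 K \<gamma> * (?P bs * (x t (bs ! (t - 1)) / pt K \<gamma> s0 x bs t)))"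
        unfolding RH_def by (simp add: distrib_left sum.distrib sum_distrib_left sum_distrib_right mult.commute mult.left_commute)
      also have "(\<Sum>bs\<in>Ls K N. \<Sum>t\<in>{s0+1..e}. c1 K \<gamma> * (?P bs * x t (bs ! (t - 1))))
         = c1 K \<gamma> * (\<Sum>bs\<in>Ls K N. ?P bs * (\<Sum>t\<in>{s0+1..e}. x t (bs ! (t - 1))))"
        by (simp add: sum_distrib_left)
      also have "(\<Sum>bs\<in>Ls K N. \<Sum>t\<in>{s0+1..e}. c2 K \<gamma> * (?P bs * (x t (bs ! (t - 1)) / pt K \<gamma> s0 x bs t)))
         = c2 K \<gamma> * (\<Sum>t\<in>{s0+1..e}. \<Sum>bs\<in>Ls K N. ?P bs * (x t (bs ! (t - 1)) / pt K \<gamma> s0 x bs t))"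
        by (subst sum.swap) (simp add: sum_distrib_left)
      finally show ?thesis .
    qed
    also have "(\<Sum>bs\<in>Ls K N. ?P bs) = 1" by (rule sum_play_one[OF v])
    also have "(\<Sum>t\<in>{s0+1..e}. \<Sum>bs\<in>Ls K N. ?P bs * (x t (bs ! (t - 1)) / pt K \<gamma> s0 x bs t))
       = (\<Sum>t\<in>{s0+1..e}. \<Sum>k\<in>{1..K}. x t k)"
    proof (rule sum.cong[OF refl])
      fix t assume t: "t \<in> {s0+1..e}"
      have "(\<Sum>bs\<in>Ls K N. ?P bs * (x t (bs ! (t - 1)) / pt K \<gamma> s0 x bs t))
        = (\<Sum>as\<in>Ls K (t - 1). pmf (play ?\<pi> x (t - 1)) as *
            (\<Sum>a\<in>{1..K}. exp3_prob K \<gamma> (Wt K \<gamma> s0 x as) a *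
               (x t a / exp3_prob K \<gamma> (Wt K \<gamma> s0 x as) a)))"
        using exp_step[where t=t and N=N and G="\<lambda>w a. x t a / exp3_prob K \<gamma> w a" and x=x, OF K g1 D] t e
        unfolding pt_def by simp
      also have "\<dots> = (\<Sum>as\<in>Ls K (t - 1). pmf (play ?\<pi> x (t - 1)) as * (\<Sum>k\<in>{1..K}. x t k))"
        using sum_prob_G1[OF K g(1) g1(2)] by simp
      also have "\<dots> = (\<Sum>k\<in>{1..K}. x t k)" using sum_play_one[OF v] by (simp add: sum_distrib_right[symmetric])
      finally show "(\<Sum>bs\<in>Ls K N. ?P bs * (x t (bs ! (t - 1)) / pt K \<gamma> s0 x bs t)) = (\<Sum>k\<in>{1..K}. x t k)" .
    qed
    finally show ?thesis by simp
  qed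
  finally show ?thesis .
qed



lemma gamma_alg:
  fixes A c D :: real
  assumes "0 < A" "0 < c" "0 < D"
  defines "\<gamma> \<equiv> sqrt (A / (c * D))"
  shows "c * \<gamma> * D + A / \<gamma> = 2 * sqrt c * sqrt (D * A)"
proof -
  define s where "s = sqrt c"
  define d where "d = sqrt D"
  define a where "a = sqrt A"
  have pos: "0 < s" "0 < d" "0 < a" using assms unfolding s_def d_def a_def by auto
  have sq: "c = s * s" "D = d * d" "A = a * a" using assms unfolding s_def d_def a_def
    by auto
  have g: "\<gamma> = a / (s * d)" unfolding \<gamma>_def a_def s_def d_def
    by (simp add: real_sqrt_divide real_sqrt_mult)
  have "sqrt (D * A) = d * a" unfolding d_def a_def by (simp add: real_sqrt_mult)
  then show ?thesis unfolding g using pos unfolding sq s_def[symmetric] by (simp add: field_simps)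
qed

lemma exp3_batch_bound:
  assumes K: "K \<ge> 2" and D: "\<Delta> \<ge> 1" "s0 = (j - 1) * \<Delta>"
    and e: "s0 \<le> e" "e \<le> s0 + \<Delta>" "e \<le> N"
    and x: "\<And>t k. t \<in> {s0+1..e} \<Longrightarrow> k \<in> {1..K} \<Longrightarrow> 0 \<le> x t k \<and> x t k \<le> 1"
  defines "\<gamma> \<equiv> min 1 (sqrt (real K * ln (real K) / ((exp 1 - 1) * real \<Delta>)))"
  shows "Max ((\<lambda>k. \<Sum>t\<in>{s0+1..e}. x t k) ` {1..K})
     - (\<Sum>bs\<in>Ls K N. pmf (play (exp3_restart K \<Delta> \<gamma>) x N) bs * (\<Sum>t\<in>{s0+1..e}. x t (bs ! (t - 1))))
     \<le> 2 * sqrt (exp 1 - 1) * sqrt (real \<Delta> * real K * ln (real K))"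
proof -
  define G where "G k = (\<Sum>t\<in>{s0+1..e}. x t k)" for k
  define R where "R = (\<Sum>bs\<in>Ls K N. pmf (play (exp3_restart K \<Delta> \<gamma>) x N) bs * (\<Sum>t\<in>{s0+1..e}. x t (bs ! (t - 1))))"
  define B where "B = 2 * sqrt (exp 1 - 1) * sqrt (real \<Delta> * real K * ln (real K))"
  define A where "A = real K * ln (real K)"
  define c where "c = exp 1 - (1::real)"
  have K1: "K \<ge> 1" using K by simp
  have lnK: "0 < ln (real K)" using K by simp
  have Apos: "0 < A" unfolding A_def using lnK K by simp
  have c1': "1 \<le> c" unfolding c_def using exp_ge_add_one_self[of "1::real"] by simp
  have cpos: "0 < c" using c1' by simp
  have Dpos: "0 < real \<Delta>" using D by simp
  have fin: "finite ((\<lambda>k. G k) ` {1..K})" "(\<lambda>k. G k) ` {1..K} \<noteq> {}" using K by auto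
  obtain i where i: "i \<in> {1..K}" and Mi: "Max ((\<lambda>k. G k) ` {1..K}) = G i"
    using Max_in[OF fin] by auto
  have Gmax: "G k \<le> G i" if "k \<in> {1..K}" for k
  proof -
    have "G k \<in> (\<lambda>k. G k) ` {1..K}" using that by blast
    then show ?thesis using Max_ge[OF fin(1)] Mi by metis
  qed
  have G0: "0 \<le> G k" if "k \<in> {1..K}" for k unfolding G_def using x that by (intro sum_nonneg) auto
  have GD: "G k \<le> real \<Delta>" if "k \<in> {1..K}" for k
  proof -
    have "G k \<le> (\<Sum>t\<in>{s0+1..e}. 1)" unfolding G_def using x that by (intro sum_mono) auto
    also have "\<dots> = real (e - s0)" by simp
    also have "\<dots> \<le> real \<Delta>" using e by simp
    finally show ?thesis .
  qed
  have R0: "0 \<le> R" unfolding R_def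
  proof (intro sum_nonneg mult_nonneg_nonneg pmf_nonneg)
    fix bs t assume bs: "bs \<in> Ls K N" and t: "t \<in> {s0+1..e}"
    have "bs ! (t - 1) \<in> set bs" using bs t e by (auto simp: Ls_def)
    then have "bs ! (t - 1) \<in> {1..K}" using bs by (auto simp: Ls_def)
    then show "0 \<le> x t (bs ! (t - 1))" using x t by blast
  qed
  have Beq: "B = 2 * sqrt c * sqrt (real \<Delta> * A)" unfolding B_def c_def A_def by (simp add: mult.assoc)
  show ?thesis
  proof (cases "sqrt (A / (c * real \<Delta>)) < 1")
    case False
    then have "1 \<le> A / (c * real \<Delta>)" by (simp add: not_less)
    then have AcD: "c * real \<Delta> \<le> A" using cpos Dpos by (simp add: field_simps)
    have "real \<Delta> \<le> 2 * c * real \<Delta>" using c1' Dpos by simp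
    also have "2 * c * real \<Delta> = 2 * sqrt c * sqrt (real \<Delta> * (c * real \<Delta>))"
    proof -
      have "sqrt (real \<Delta> * (c * real \<Delta>)) = sqrt c * real \<Delta>"
        using Dpos by (simp add: real_sqrt_mult)
      moreover have "sqrt c * sqrt c = c" using cpos by simp
      ultimately show ?thesis by (simp add: mult.assoc mult.left_commute)
    qed
    also have "\<dots> \<le> B" unfolding Beq
      using AcD cpos Dpos by (intro mult_left_mono real_sqrt_le_mono mult_left_mono) auto
    finally have "real \<Delta> \<le> B" .
    then show ?thesis using GD[OF i] R0 Mi unfolding G_def[symmetric] R_def[symmetric] B_def[symmetric] by simp
  next
    case True
    have gam: "\<gamma> = sqrt (A / (c * real \<Delta>))" unfolding \<gamma>_def A_def c_def using True
      unfolding A_def c_def by simp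
    have g0: "0 < \<gamma>" unfolding gam using Apos cpos Dpos by simp
    have g1: "\<gamma> < 1" unfolding gam using True .
    have xx: "\<And>t k. t \<in> {s0+1..e} \<Longrightarrow> k \<in> {1..K} \<Longrightarrow> 0 \<le> x t k \<and> x t k \<le> 1" by (rule x)
    have bi: "\<gamma> / real K * G i \<le> ln (real K) + c1 K \<gamma> * R + c2 K \<gamma> * (\<Sum>t\<in>{s0+1..e}. \<Sum>k\<in>{1..K}. x t k)"
      using batch_ineq[OF K1 g0 g1 D e xx i] unfolding G_def R_def .
    have "(\<Sum>t\<in>{s0+1..e}. \<Sum>k\<in>{1..K}. x t k) = (\<Sum>k\<in>{1..K}. G k)"
      unfolding G_def by (rule sum.swap)
    also have "\<dots> \<le> (\<Sum>k\<in>{1..K}. G i)" by (intro sum_mono Gmax)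
    also have "\<dots> = real K * G i" by simp
    finally have sG: "(\<Sum>t\<in>{s0+1..e}. \<Sum>k\<in>{1..K}. x t k) \<le> real K * G i" .
    have c2p: "0 \<le> c2 K \<gamma>" unfolding c2_def using g1 c1' unfolding c_def by simp
    have bi2: "\<gamma> / real K * G i \<le> ln (real K) + c1 K \<gamma> * R + c2 K \<gamma> * (real K * G i)"
      using bi mult_left_mono[OF sG c2p] by linarith
    define M where "M = G i"
    have Kp: "0 < real K" using K by simp
    have "(1 - \<gamma>) * M \<le> (1 - \<gamma>) * (real K * ln (real K)) / \<gamma> + R + (exp 1 - 2) * \<gamma> * M"
    proof -
      have "real K * (1 - \<gamma>) / \<gamma> * (\<gamma> / real K * M) \<le> real K * (1 - \<gamma>) / \<gamma> * (ln (real K) + c1 K \<gamma> * R + c2 K \<gamma> * (real K * M))"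
        using bi2 g0 g1 Kp unfolding M_def by (intro mult_left_mono) auto
      moreover have "real K * (1 - \<gamma>) / \<gamma> * (\<gamma> / real K * M) = (1 - \<gamma>) * M" using g0 Kp by (simp add: field_simps)
      moreover have "real K * (1 - \<gamma>) / \<gamma> * (ln (real K) + c1 K \<gamma> * R + c2 K \<gamma> * (real K * M)) =
          (1 - \<gamma>) * (real K * ln (real K)) / \<gamma> + R + (exp 1 - 2) * \<gamma> * M"
      proof -
        have gen: "k * d / u * (L + (u / k) / d * R + E * (u / k)\<^sup>2 / d * (k * M)) = d * (k * L) / u + R + E * u * M"
          if "d \<noteq> 0" "u \<noteq> 0" "k \<noteq> 0" for k d u L E :: real
          using that by (simp add: field_simps power2_eq_square)
        show ?thesis unfolding c1_def c2_def using g0 g1 Kp by (intro gen) auto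
      qed
      ultimately show ?thesis by simp
    qed
    then have "M - R \<le> c * \<gamma> * M + (1 - \<gamma>) * A / \<gamma>"
      unfolding c_def A_def by (simp add: algebra_simps)
    also have "(1 - \<gamma>) * A / \<gamma> \<le> A / \<gamma>" using g0 Apos by (simp add: divide_right_mono)
    also have "c * \<gamma> * M \<le> c * \<gamma> * real \<Delta>" unfolding M_def using GD[OF i] cpos g0 by simp
    also have "c * \<gamma> * real \<Delta> + A / \<gamma> = B" unfolding Beq gam by (rule gamma_alg[OF Apos cpos Dpos])
    finally show ?thesis using Mi unfolding M_def G_def[symmetric] R_def[symmetric] B_def[symmetric] by simp
  qed
qed



lemma space_rewspace: "space (rewspace K) = (\<Pi>\<^sub>E k\<in>{1..K}. {0..1::real})"
  unfolding rewspace_def by (simp add: space_PiM space_restrict_space)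

lemma envs_D:
  assumes "\<nu> \<in> envs K T VT" "t \<in> {1..T}"
  shows "prob_space (\<nu> t)" "sets (\<nu> t) = sets (rewspace K)" "space (\<nu> t) = space (rewspace K)"
proof -
  show "prob_space (\<nu> t)" "sets (\<nu> t) = sets (rewspace K)" using assms unfolding envs_def by auto
  then show "space (\<nu> t) = space (rewspace K)" by (intro sets_eq_imp_space_eq) simp
qed

lemma space_omega:
  assumes "\<nu> \<in> envs K T VT" "x \<in> space (omega T \<nu>)"
  shows "t \<in> {1..T} \<Longrightarrow> k \<in> {1..K} \<Longrightarrow> 0 \<le> x t k \<and> x t k \<le> 1"
    and "t \<notin> {1..T} \<Longrightarrow> x t = undefined"
    and "t \<in> {1..T} \<Longrightarrow> k \<notin> {1..K} \<Longrightarrow> x t k = undefined"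
proof -
  have x: "x \<in> (\<Pi>\<^sub>E t\<in>{1..T}. space (\<nu> t))" using assms(2) unfolding omega_def by (simp add: space_PiM)
  show "t \<in> {1..T} \<Longrightarrow> k \<in> {1..K} \<Longrightarrow> 0 \<le> x t k \<and> x t k \<le> 1"
    using x envs_D(3)[OF assms(1)] unfolding space_rewspace by (auto simp: PiE_iff)
  show "t \<notin> {1..T} \<Longrightarrow> x t = undefined" using x by (auto simp: PiE_iff extensional_def)
  show "t \<in> {1..T} \<Longrightarrow> k \<notin> {1..K} \<Longrightarrow> x t k = undefined"
    using x envs_D(3)[OF assms(1)] unfolding space_rewspace by (auto simp: PiE_iff extensional_def)
qed

lemma prob_omega:
  assumes "\<nu> \<in> envs K T VT"
  shows "prob_space (omega T \<nu>)"
  unfolding omega_def using envs_D(1)[OF assms] by (intro prob_space_PiM) auto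

lemma coord_meas:
  assumes "\<nu> \<in> envs K T VT"
  shows "(\<lambda>x. x t k) \<in> borel_measurable (omega T \<nu>)"
proof (cases "t \<in> {1..T}")
  case True
  note t = True
  show ?thesis
  proof (cases "k \<in> {1..K}")
    case True
    have "(\<lambda>y. y k) \<in> measurable (rewspace K) (restrict_space borel {0..1::real})"
      unfolding rewspace_def using True by (rule measurable_component_singleton)
    moreover have "(\<lambda>y. y) \<in> measurable (restrict_space borel {0..1::real}) borel"
      by (intro measurable_restrict_space1) simp
    ultimately have "(\<lambda>y. y k) \<in> measurable (rewspace K) borel"
      using measurable_comp by (fastforce simp: comp_def)
    then have m: "(\<lambda>y. y k) \<in> measurable (\<nu> t) borel"
      using envs_D(2)[OF assms t] measurable_cong_sets by blast
    have "(\<lambda>x. x t) \<in> measurable (omega T \<nu>) (\<nu> t)"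
      unfolding omega_def using t by (rule measurable_component_singleton)
    then show ?thesis using m measurable_comp by (fastforce simp: comp_def)
  next
    case False
    have "((\<lambda>x. x t k) \<in> borel_measurable (omega T \<nu>)) = ((\<lambda>x. undefined :: real) \<in> borel_measurable (omega T \<nu>))"
      by (rule measurable_cong) (simp add: space_omega(3)[OF assms _ t False])
    then show ?thesis by simp
  qed
next
  case False
  define c :: real where "c = (undefined :: nat \<Rightarrow> real) k"
  have "((\<lambda>x. x t k) \<in> borel_measurable (omega T \<nu>)) = ((\<lambda>x. c) \<in> borel_measurable (omega T \<nu>))"
    by (rule measurable_cong) (simp add: space_omega(2)[OF assms _ False] c_def)
  then show ?thesis by simp
qed


lemma weights_meas:
  assumes X: "\<And>s a. (\<lambda>x. x s a) \<in> borel_measurable M"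
  shows "(\<lambda>x. exp3_weights K \<gamma> (map (\<lambda>(s, a). (a, x s a)) L) k) \<in> borel_measurable M"
proof (induction L arbitrary: k rule: rev_induct)
  case Nil
  then show ?case by (simp add: exp3_weights_def)
next
  case (snoc p L)
  obtain s a where p: "p = (s, a)" by force
  define W where "W x = exp3_weights K \<gamma> (map (\<lambda>(s, a). (a, x s a)) L)" for x
  have IH: "(\<lambda>x. W x k) \<in> borel_measurable M" for k unfolding W_def by (rule snoc.IH)
  have eq: "exp3_weights K \<gamma> (map (\<lambda>(s, a). (a, x s a)) (L @ [p])) k =
     (if k = a then W x a * exp (\<gamma> * (x s a / ((1 - \<gamma>) * W x a / (\<Sum>k'\<in>{1..K}. W x k') + \<gamma> / real K)) / real K)
      else W x k)" for x
    unfolding W_def exp3_weights_def p by (simp add: exp3_step_def exp3_prob_def)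
  have m1: "(\<lambda>x. \<Sum>k'\<in>{1..K}. W x k') \<in> borel_measurable M" using IH by (intro borel_measurable_sum) auto
  have eqf: "(\<lambda>x. exp3_weights K \<gamma> (map (\<lambda>(s, a). (a, x s a)) (L @ [p])) k) = (\<lambda>x.
     (if k = a then W x a * exp (\<gamma> * (x s a / ((1 - \<gamma>) * W x a / (\<Sum>k'\<in>{1..K}. W x k') + \<gamma> / real K)) / real K)
      else W x k))" by (rule ext) (rule eq)
  have ma: "(\<lambda>x. W x a * exp (\<gamma> * (x s a / ((1 - \<gamma>) * W x a / (\<Sum>k'\<in>{1..K}. W x k') + \<gamma> / real K)) / real K))
        \<in> borel_measurable M"
    using IH m1 X by measurable
  show ?case unfolding eqf using ma IH by (cases "k = a") auto
qed

lemma hist_map: "hist x cs = map (\<lambda>(s, a). (a, x s a)) (zip [1..<Suc (length cs)] cs)"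
  unfolding hist_def ..

lemma exp3_measurable:
  assumes \<nu>: "\<nu> \<in> envs K T VT" and K: "K \<ge> 1" and g: "0 \<le> \<gamma>" "\<gamma> \<le> 1"
  shows "policy_measurable T (exp3_restart K \<Delta> \<gamma>) \<nu>"
  unfolding policy_measurable_def
proof (intro allI)
  fix n as
  let ?M = "omega T \<nu>"
  have X: "\<And>s a. (\<lambda>x. x s a) \<in> borel_measurable ?M" using coord_meas[OF \<nu>] .
  have Wm: "(\<lambda>x. exp3_weights K \<gamma> (drop d (hist x cs)) k) \<in> borel_measurable ?M" for d cs k
    unfolding hist_map drop_map by (rule weights_meas[OF X])
  have Pm: "(\<lambda>x. pmf (exp3_restart K \<Delta> \<gamma> t (hist x cs)) a) \<in> borel_measurable ?M" for t cs a
  proof -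
    define d where "d = (t - 1) div \<Delta> * \<Delta>"
    have m1: "(\<lambda>x. \<Sum>k'\<in>{1..K}. exp3_weights K \<gamma> (drop d (hist x cs)) k') \<in> borel_measurable ?M"
      using Wm by (intro borel_measurable_sum) auto
    have "(\<lambda>x. (1 - \<gamma>) * exp3_weights K \<gamma> (drop d (hist x cs)) a / (\<Sum>k'\<in>{1..K}. exp3_weights K \<gamma> (drop d (hist x cs)) k') + \<gamma> / real K)
       \<in> borel_measurable ?M"
      using Wm m1 by measurable
    then show ?thesis unfolding pmf_exp3_restart[OF K g] e3p_def d_def[symmetric] exp3_prob_def
      by (cases "a \<in> {1..K}") auto
  qed
  show "(\<lambda>x. pmf (play (exp3_restart K \<Delta> \<gamma>) x n) as) \<in> borel_measurable ?M"
  proof (induction n arbitrary: as)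
    case 0
    then show ?case by (simp add: pmf_return)
  next
    case (Suc n)
    show ?case unfolding pmf_play_Suc
      using Suc.IH Pm by (cases "as = []") auto
  qed
qed



definition Mext :: "(nat \<Rightarrow> (nat \<Rightarrow> real) measure) \<Rightarrow> nat \<Rightarrow> nat \<Rightarrow> (nat \<Rightarrow> real) measure" where
  "Mext \<nu> T i = (if i \<in> {1..T} then \<nu> i else return (count_space UNIV) (\<lambda>_. 0))"

lemma Mext_prob:
  assumes "\<nu> \<in> envs K T VT"
  shows "prob_space (Mext \<nu> T i)"
  unfolding Mext_def using envs_D(1)[OF assms] by (auto intro: prob_space_return)

lemma omega_Mext: "omega T \<nu> = PiM {1..T} (Mext \<nu> T)"
  unfolding omega_def by (rule PiM_cong) (auto simp: Mext_def)

lemma pmf_play_01: "0 \<le> pmf p a \<and> pmf p a \<le> 1"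
  by (simp add: pmf_le_1)

lemma indep_term:
  assumes \<nu>: "\<nu> \<in> envs K T VT" and pm: "policy_measurable T \<pi> \<nu>"
    and t: "t \<in> {1..T}" and a: "a \<in> {1..K}"
  shows "(\<integral>x. pmf (play \<pi> x t) cs * x t a \<partial>omega T \<nu>) = (\<integral>x. pmf (play \<pi> x t) cs * mu \<nu> t a \<partial>omega T \<nu>)"
proof -
  let ?M = "Mext \<nu> T"
  interpret PS: product_prob_space ?M "{1..T}"
    by (intro product_prob_space.intro product_sigma_finite.intro product_prob_space_axioms.intro)
       (auto intro: prob_space_imp_sigma_finite Mext_prob[OF \<nu>])
  interpret P: prob_space "omega T \<nu>" by (rule prob_omega[OF \<nu>])
  define I where "I = {1..T} - {t}"
  have IT: "insert t I = {1..T}" "finite I" "t \<notin> I" using t unfolding I_def by auto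
  have Mt: "?M t = \<nu> t" using t by (simp add: Mext_def)
  have pmm: "(\<lambda>x. pmf (play \<pi> x t) cs) \<in> borel_measurable (omega T \<nu>)"
    using pm unfolding policy_measurable_def by blast
  have int1: "integrable (omega T \<nu>) (\<lambda>x. pmf (play \<pi> x t) cs * x t a)"
  proof (rule P.integrable_const_bound[where B=1])
    show "AE x in omega T \<nu>. norm (pmf (play \<pi> x t) cs * x t a) \<le> 1"
    proof (rule AE_I2)
      fix x assume "x \<in> space (omega T \<nu>)"
      then have "0 \<le> x t a \<and> x t a \<le> 1" using space_omega(1)[OF \<nu> _ t a] by blast
      then show "norm (pmf (play \<pi> x t) cs * x t a) \<le> 1"
        using pmf_play_01[of "play \<pi> x t" cs] by (simp add: abs_mult mult_le_one)
    qed
    show "(\<lambda>x. pmf (play \<pi> x t) cs * x t a) \<in> borel_measurable (omega T \<nu>)"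
      using pmm coord_meas[OF \<nu>] by measurable
  qed
  have mu01: "0 \<le> mu \<nu> t a \<and> mu \<nu> t a \<le> 1" using \<nu> t a unfolding envs_def Vset_def by auto
  have int2: "integrable (omega T \<nu>) (\<lambda>x. pmf (play \<pi> x t) cs * mu \<nu> t a)"
  proof (rule P.integrable_const_bound[where B=1])
    show "AE x in omega T \<nu>. norm (pmf (play \<pi> x t) cs * mu \<nu> t a) \<le> 1"
      using pmf_play_01[of "play \<pi> _ t" cs] mu01 by (auto simp: abs_mult mult_le_one)
    show "(\<lambda>x. pmf (play \<pi> x t) cs * mu \<nu> t a) \<in> borel_measurable (omega T \<nu>)"
      using pmm by measurable
  qed
  have upd: "play \<pi> (x(t := y)) t = play \<pi> x t" for x y
    by (rule play_cong) auto
  have "(\<integral>x. pmf (play \<pi> x t) cs * x t a \<partial>omega T \<nu>) =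
        (\<integral>x. (\<integral>y. pmf (play \<pi> (x(t := y)) t) cs * (x(t := y)) t a \<partial>?M t) \<partial>PiM I ?M)"
    using int1 unfolding omega_Mext IT(1)[symmetric] by (rule PS.product_integral_insert[OF IT(2,3)])
  also have "\<dots> = (\<integral>x. pmf (play \<pi> x t) cs * mu \<nu> t a \<partial>PiM I ?M)"
    unfolding upd Mt mu_def by simp
  also have "\<dots> = (\<integral>x. (\<integral>y. pmf (play \<pi> (x(t := y)) t) cs * mu \<nu> t a \<partial>?M t) \<partial>PiM I ?M)"
    unfolding upd Mt using prob_space.prob_space[OF envs_D(1)[OF \<nu> t]] by simp
  also have "\<dots> = (\<integral>x. pmf (play \<pi> x t) cs * mu \<nu> t a \<partial>omega T \<nu>)"
    using int2 unfolding omega_Mext IT(1)[symmetric] by (rule PS.product_integral_insert[OF IT(2,3), symmetric])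
  finally show ?thesis .
qed


lemma int_px:
  assumes \<nu>: "\<nu> \<in> envs K T VT" and pm: "policy_measurable T \<pi> \<nu>"
    and t: "t \<in> {1..T}" and a: "a \<in> {1..K}"
  shows "integrable (omega T \<nu>) (\<lambda>x. pmf (play \<pi> x n) cs * x t a)"
proof -
  interpret P: prob_space "omega T \<nu>" by (rule prob_omega[OF \<nu>])
  have pmm: "(\<lambda>x. pmf (play \<pi> x n) cs) \<in> borel_measurable (omega T \<nu>)"
    using pm unfolding policy_measurable_def by blast
  show ?thesis
  proof (rule P.integrable_const_bound[where B=1])
    show "AE x in omega T \<nu>. norm (pmf (play \<pi> x n) cs * x t a) \<le> 1"
    proof (rule AE_I2)
      fix x assume "x \<in> space (omega T \<nu>)"
      then have "0 \<le> x t a \<and> x t a \<le> 1" using space_omega(1)[OF \<nu> _ t a] by blast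
      then show "norm (pmf (play \<pi> x n) cs * x t a) \<le> 1"
        using pmf_play_01[of "play \<pi> x n" cs] by (simp add: abs_mult mult_le_one)
    qed
    show "(\<lambda>x. pmf (play \<pi> x n) cs * x t a) \<in> borel_measurable (omega T \<nu>)"
      using pmm coord_meas[OF \<nu>] by measurable
  qed
qed

lemma int_pc:
  assumes \<nu>: "\<nu> \<in> envs K T VT" and pm: "policy_measurable T \<pi> \<nu>"
  shows "integrable (omega T \<nu>) (\<lambda>x. pmf (play \<pi> x n) cs * c)"
proof -
  interpret P: prob_space "omega T \<nu>" by (rule prob_omega[OF \<nu>])
  have pmm: "(\<lambda>x. pmf (play \<pi> x n) cs) \<in> borel_measurable (omega T \<nu>)"
    using pm unfolding policy_measurable_def by blast
  show ?thesis
  proof (rule P.integrable_const_bound[where B="\<bar>c\<bar>"])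
    show "AE x in omega T \<nu>. norm (pmf (play \<pi> x n) cs * c) \<le> \<bar>c\<bar>"
      using pmf_play_01[of "play \<pi> _ n" cs] by (auto simp: abs_mult mult_left_le_one_le)
    show "(\<lambda>x. pmf (play \<pi> x n) cs * c) \<in> borel_measurable (omega T \<nu>)"
      using pmm by measurable
  qed
qed

lemma Ls_nth:
  assumes "bs \<in> Ls K n" "1 \<le> t" "t \<le> n"
  shows "bs ! (t - 1) \<in> {1..K}"
proof -
  have "bs ! (t - 1) \<in> set bs" using assms by (auto simp: Ls_def)
  then show ?thesis using assms unfolding Ls_def by blast
qed

lemma indep_t:
  assumes \<nu>: "\<nu> \<in> envs K T VT" and v: "valid_policy K \<pi>" and pm: "policy_measurable T \<pi> \<nu>"
    and t: "t \<in> {1..T}"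
  shows "(\<integral>x. (\<Sum>bs\<in>Ls K T. pmf (play \<pi> x T) bs * mu \<nu> t (bs ! (t - 1))) \<partial>omega T \<nu>)
       = (\<integral>x. (\<Sum>bs\<in>Ls K T. pmf (play \<pi> x T) bs * x t (bs ! (t - 1))) \<partial>omega T \<nu>)"
proof -
  have tT: "t \<le> T" using t by simp
  have red: "(\<Sum>bs\<in>Ls K T. pmf (play \<pi> x T) bs * h (bs ! (t - 1))) =
             (\<Sum>cs\<in>Ls K t. pmf (play \<pi> x t) cs * h (cs ! (t - 1)))" for x and h :: "nat \<Rightarrow> real"
  proof -
    have "(\<Sum>bs\<in>Ls K T. pmf (play \<pi> x T) bs * h (bs ! (t - 1))) =
          (\<Sum>bs\<in>Ls K T. pmf (play \<pi> x T) bs * (\<lambda>cs. h (cs ! (t - 1))) (take t bs))"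
      using t by (intro sum.cong refl) (auto simp: Ls_def)
    also have "\<dots> = (\<Sum>cs\<in>Ls K t. pmf (play \<pi> x t) cs * h (cs ! (t - 1)))"
      by (rule sum_play_take[OF v tT])
    finally show ?thesis .
  qed
  have a: "cs \<in> Ls K t \<Longrightarrow> cs ! (t - 1) \<in> {1..K}" for cs using Ls_nth[of cs K t t] t by auto
  have "(\<integral>x. (\<Sum>bs\<in>Ls K T. pmf (play \<pi> x T) bs * mu \<nu> t (bs ! (t - 1))) \<partial>omega T \<nu>)
      = (\<integral>x. (\<Sum>cs\<in>Ls K t. pmf (play \<pi> x t) cs * mu \<nu> t (cs ! (t - 1))) \<partial>omega T \<nu>)"
    by (subst red) rule
  also have "\<dots> = (\<Sum>cs\<in>Ls K t. (\<integral>x. pmf (play \<pi> x t) cs * mu \<nu> t (cs ! (t - 1)) \<partial>omega T \<nu>))"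
    by (rule Bochner_Integration.integral_sum) (rule int_pc[OF \<nu> pm])
  also have "\<dots> = (\<Sum>cs\<in>Ls K t. (\<integral>x. pmf (play \<pi> x t) cs * x t (cs ! (t - 1)) \<partial>omega T \<nu>))"
    using indep_term[OF \<nu> pm t a] by simp
  also have "\<dots> = (\<integral>x. (\<Sum>cs\<in>Ls K t. pmf (play \<pi> x t) cs * x t (cs ! (t - 1))) \<partial>omega T \<nu>)"
    by (rule Bochner_Integration.integral_sum[symmetric]) (rule int_px[OF \<nu> pm t a])
  also have "\<dots> = (\<integral>x. (\<Sum>bs\<in>Ls K T. pmf (play \<pi> x T) bs * x t (bs ! (t - 1))) \<partial>omega T \<nu>)"
    by (subst red) rule
  finally show ?thesis .
qed

lemma int_sumx:
  assumes \<nu>: "\<nu> \<in> envs K T VT" and pm: "policy_measurable T \<pi> \<nu>"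
    and t: "t \<in> {1..T}"
  shows "integrable (omega T \<nu>) (\<lambda>x. \<Sum>bs\<in>Ls K T. pmf (play \<pi> x T) bs * x t (bs ! (t - 1)))"
  using Ls_nth[of _ K T t] t by (intro Bochner_Integration.integrable_sum int_px[OF \<nu> pm t]) auto

lemma int_summu:
  assumes \<nu>: "\<nu> \<in> envs K T VT" and pm: "policy_measurable T \<pi> \<nu>"
  shows "integrable (omega T \<nu>) (\<lambda>x. \<Sum>bs\<in>Ls K T. pmf (play \<pi> x T) bs * c bs)"
  by (intro Bochner_Integration.integrable_sum int_pc[OF \<nu> pm])

lemma pol_reward_x:
  assumes \<nu>: "\<nu> \<in> envs K T VT" and v: "valid_policy K \<pi>" and pm: "policy_measurable T \<pi> \<nu>"
    and S: "S \<subseteq> {1..T}"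
  shows "pol_reward T \<pi> \<nu> S = (\<integral>x. (\<Sum>bs\<in>Ls K T. pmf (play \<pi> x T) bs * (\<Sum>t\<in>S. x t (bs ! (t - 1)))) \<partial>omega T \<nu>)"
proof -
  have fS: "finite S" using S finite_subset by blast
  have "pol_reward T \<pi> \<nu> S = (\<integral>x. (\<Sum>bs\<in>Ls K T. pmf (play \<pi> x T) bs * (\<Sum>t\<in>S. mu \<nu> t (bs ! (t - 1)))) \<partial>omega T \<nu>)"
    unfolding pol_reward_def expectation_play[OF v] ..
  also have "\<dots> = (\<integral>x. (\<Sum>t\<in>S. \<Sum>bs\<in>Ls K T. pmf (play \<pi> x T) bs * mu \<nu> t (bs ! (t - 1))) \<partial>omega T \<nu>)"
    by (simp add: sum_distrib_left sum.swap[of _ S])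
  also have "\<dots> = (\<Sum>t\<in>S. \<integral>x. (\<Sum>bs\<in>Ls K T. pmf (play \<pi> x T) bs * mu \<nu> t (bs ! (t - 1))) \<partial>omega T \<nu>)"
    by (rule Bochner_Integration.integral_sum) (rule int_summu[OF \<nu> pm])
  also have "\<dots> = (\<Sum>t\<in>S. \<integral>x. (\<Sum>bs\<in>Ls K T. pmf (play \<pi> x T) bs * x t (bs ! (t - 1))) \<partial>omega T \<nu>)"
    using indep_t[OF \<nu> v pm] S by (intro sum.cong) auto
  also have "\<dots> = (\<integral>x. (\<Sum>t\<in>S. \<Sum>bs\<in>Ls K T. pmf (play \<pi> x T) bs * x t (bs ! (t - 1))) \<partial>omega T \<nu>)"
    using int_sumx[OF \<nu> pm] S by (intro Bochner_Integration.integral_sum[symmetric]) auto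
  also have "\<dots> = (\<integral>x. (\<Sum>bs\<in>Ls K T. pmf (play \<pi> x T) bs * (\<Sum>t\<in>S. x t (bs ! (t - 1)))) \<partial>omega T \<nu>)"
    by (simp add: sum_distrib_left sum.swap[of _ S])
  finally show ?thesis .
qed



definition bidx :: "nat \<Rightarrow> nat \<Rightarrow> nat" where "bidx \<Delta> t = (t - 1) div \<Delta> + 1"

lemma batch_eq:
  assumes "\<Delta> \<ge> 1" "j \<ge> 1"
  shows "batch \<Delta> T j = {t \<in> {1..T}. bidx \<Delta> t = j}"
proof (intro set_eqI iffI)
  fix t assume t: "t \<in> batch \<Delta> T j"
  then have t1: "(j - 1) * \<Delta> + 1 \<le> t" "t \<le> j * \<Delta>" "t \<le> T" by (auto simp: batch_def)
  have a1: "\<Delta> * (j - 1) \<le> t - 1" using t1 by (simp add: mult.commute)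
  have "j * \<Delta> = (j - 1) * \<Delta> + \<Delta>" using assms by (cases j) auto
  then have a2: "t - 1 < \<Delta> * Suc (j - 1)" using t1 assms by (simp add: mult.commute)
  have "(t - 1) div \<Delta> = j - 1" using div_nat_eqI[OF a1 a2] .
  then show "t \<in> {t \<in> {1..T}. bidx \<Delta> t = j}" using t1 assms by (auto simp: bidx_def)
next
  fix t assume t: "t \<in> {t \<in> {1..T}. bidx \<Delta> t = j}"
  then have q: "(t - 1) div \<Delta> = j - 1" and t1: "1 \<le> t" "t \<le> T" using assms by (auto simp: bidx_def)
  have "(j - 1) * \<Delta> \<le> t - 1" by (metis q div_times_less_eq_dividend)
  then have b1: "(j - 1) * \<Delta> + 1 \<le> t" using t1 by linarith
  have "t - 1 < \<Delta> + ((t - 1) div \<Delta>) * \<Delta>" using assms by (intro dividend_less_div_times) simp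
  then have "t - 1 < \<Delta> + \<Delta> * ((t - 1) div \<Delta>)" by (simp add: mult.commute)
  then have "t - 1 < \<Delta> + \<Delta> * (j - 1)" using q by simp
  moreover have "\<Delta> + \<Delta> * (j - 1) = j * \<Delta>" using assms by (cases j) (auto simp: algebra_simps)
  ultimately have b2: "t \<le> j * \<Delta>" using t1 by simp
  show "t \<in> batch \<Delta> T j" using b1 b2 t1 by (auto simp: batch_def)
qed

lemma bidx_range:
  assumes "\<Delta> \<ge> 1" "t \<in> {1..T}"
  shows "bidx \<Delta> t \<in> {1..nat \<lceil>real T / real \<Delta>\<rceil>}"
proof -
  define q where "q = (t - 1) div \<Delta>"
  have "q * \<Delta> \<le> t - 1" unfolding q_def by simp
  then have "real q * real \<Delta> \<le> real (t - 1)" by (metis of_nat_le_iff of_nat_mult)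
  also have "\<dots> < real T" using assms by simp
  finally have "real q < real T / real \<Delta>" using assms by (simp add: field_simps)
  then have "int q < \<lceil>real T / real \<Delta>\<rceil>" by (simp add: less_ceiling_iff)
  then have "q < nat \<lceil>real T / real \<Delta>\<rceil>" by linarith
  then show ?thesis unfolding bidx_def q_def[symmetric] by simp
qed

lemma sum_batches:
  fixes f :: "nat \<Rightarrow> real"
  assumes "\<Delta> \<ge> 1"
  shows "(\<Sum>t\<in>{1..T}. f t) = (\<Sum>j\<in>{1..nat \<lceil>real T / real \<Delta>\<rceil>}. \<Sum>t\<in>batch \<Delta> T j. f t)"
proof -
  have "(\<Sum>j\<in>{1..nat \<lceil>real T / real \<Delta>\<rceil>}. \<Sum>t\<in>batch \<Delta> T j. f t) =
        (\<Sum>j\<in>{1..nat \<lceil>real T / real \<Delta>\<rceil>}. \<Sum>t\<in>{t \<in> {1..T}. bidx \<Delta> t = j}. f t)"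
    using batch_eq[OF assms] by (intro sum.cong) auto
  also have "\<dots> = (\<Sum>t\<in>{1..T}. f t)"
    using bidx_range[OF assms] by (intro sum.group) auto
  finally show ?thesis by simp
qed

lemma finite_batch: "finite (batch \<Delta> T j)"
  unfolding batch_def by (rule finite_subset[of _ "{..T}"]) auto

lemma batch_sub: "batch \<Delta> T j \<subseteq> {1..T}"
  unfolding batch_def by auto

lemma card_batch: "card (batch \<Delta> T j) \<le> \<Delta>"
proof -
  have "batch \<Delta> T j \<subseteq> {(j - 1) * \<Delta> + 1..j * \<Delta>}" unfolding batch_def by auto
  then have "card (batch \<Delta> T j) \<le> card {(j - 1) * \<Delta> + 1..j * \<Delta>}" by (intro card_mono) auto
  also have "\<dots> \<le> \<Delta>" by (cases j) (auto simp: algebra_simps)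
  finally show ?thesis .
qed



lemma yk_meas:
  assumes \<nu>: "\<nu> \<in> envs K T VT" and t: "t \<in> {1..T}" and k: "k \<in> {1..K}"
  shows "(\<lambda>y. y k) \<in> borel_measurable (\<nu> t)"
proof -
  have "(\<lambda>y. y k) \<in> measurable (rewspace K) (restrict_space borel {0..1::real})"
    unfolding rewspace_def using k by (rule measurable_component_singleton)
  moreover have "(\<lambda>y. y) \<in> measurable (restrict_space borel {0..1::real}) borel"
    by (intro measurable_restrict_space1) simp
  ultimately have "(\<lambda>y. y k) \<in> measurable (rewspace K) borel"
    using measurable_comp by (fastforce simp: comp_def)
  then show ?thesis using envs_D(2)[OF \<nu> t] measurable_cong_sets by blast
qed

lemma coord_int:
  assumes \<nu>: "\<nu> \<in> envs K T VT" and t: "t \<in> {1..T}" and k: "k \<in> {1..K}"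
  shows "integrable (omega T \<nu>) (\<lambda>x. x t k)" "(\<integral>x. x t k \<partial>omega T \<nu>) = mu \<nu> t k"
proof -
  interpret P: prob_space "omega T \<nu>" by (rule prob_omega[OF \<nu>])
  show "integrable (omega T \<nu>) (\<lambda>x. x t k)"
  proof (rule P.integrable_const_bound[where B=1])
    show "AE x in omega T \<nu>. norm (x t k) \<le> 1"
      using space_omega(1)[OF \<nu> _ t k] by (intro AE_I2) auto
  qed (rule coord_meas[OF \<nu>])
  have d: "distr (omega T \<nu>) (\<nu> t) (\<lambda>\<omega>. \<omega> t) = \<nu> t"
    unfolding omega_def using envs_D(1)[OF \<nu>] t by (intro distr_PiM_component) auto
  have m: "(\<lambda>\<omega>. \<omega> t) \<in> measurable (omega T \<nu>) (\<nu> t)"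
    unfolding omega_def using t by (rule measurable_component_singleton)
  show "(\<integral>x. x t k \<partial>omega T \<nu>) = mu \<nu> t k"
    unfolding mu_def using integral_distr[OF m yk_meas[OF \<nu> t k]] d by simp
qed

lemma max_int:
  assumes \<nu>: "\<nu> \<in> envs K T VT" and K: "K \<ge> 1" and S: "S \<subseteq> {1..T}"
  shows "integrable (omega T \<nu>) (\<lambda>x. Max ((\<lambda>k. \<Sum>t\<in>S. x t k) ` {1..K}))"
proof -
  interpret P: prob_space "omega T \<nu>" by (rule prob_omega[OF \<nu>])
  have fS: "finite S" using S finite_subset by blast
  show ?thesis
  proof (rule P.integrable_const_bound[where B="real (card S)"])
    show "AE x in omega T \<nu>. norm (Max ((\<lambda>k. \<Sum>t\<in>S. x t k) ` {1..K})) \<le> real (card S)"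
    proof (rule AE_I2)
      fix x assume x: "x \<in> space (omega T \<nu>)"
      obtain k where k: "k \<in> {1..K}" and mk: "Max ((\<lambda>k. \<Sum>t\<in>S. x t k) ` {1..K}) = (\<Sum>t\<in>S. x t k)"
        using Max_in[of "(\<lambda>k. \<Sum>t\<in>S. x t k) ` {1..K}"] K by fastforce
      have b: "0 \<le> x t k \<and> x t k \<le> 1" if "t \<in> S" for t using space_omega(1)[OF \<nu> x _ k] that S by auto
      have "0 \<le> (\<Sum>t\<in>S. x t k)" using b by (intro sum_nonneg) auto
      moreover have "(\<Sum>t\<in>S. x t k) \<le> (\<Sum>t\<in>S. 1)" using b by (intro sum_mono) auto
      ultimately show "norm (Max ((\<lambda>k. \<Sum>t\<in>S. x t k) ` {1..K})) \<le> real (card S)" using mk by simp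
    qed
    show "(\<lambda>x. Max ((\<lambda>k. \<Sum>t\<in>S. x t k) ` {1..K})) \<in> borel_measurable (omega T \<nu>)"
      using coord_meas[OF \<nu>] by (intro borel_measurable_Max borel_measurable_sum) auto
  qed
qed

lemma exp_max_ge:
  assumes \<nu>: "\<nu> \<in> envs K T VT" and S: "S \<subseteq> {1..T}" and k0: "k0 \<in> {1..K}"
  shows "(\<Sum>t\<in>S. mu \<nu> t k0) \<le> exp_max K T \<nu> S"
proof -
  have fS: "finite S" using S finite_subset by blast
  have K: "K \<ge> 1" using k0 by simp
  have "(\<Sum>t\<in>S. mu \<nu> t k0) = (\<Sum>t\<in>S. \<integral>x. x t k0 \<partial>omega T \<nu>)"
    using coord_int(2)[OF \<nu> _ k0] S by (intro sum.cong) auto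
  also have "\<dots> = (\<integral>x. (\<Sum>t\<in>S. x t k0) \<partial>omega T \<nu>)"
    using coord_int(1)[OF \<nu> _ k0] S by (intro Bochner_Integration.integral_sum[symmetric]) auto
  also have "\<dots> \<le> exp_max K T \<nu> S" unfolding exp_max_def
  proof (rule integral_mono)
    show "integrable (omega T \<nu>) (\<lambda>x. \<Sum>t\<in>S. x t k0)"
      using coord_int(1)[OF \<nu> _ k0] S by (intro Bochner_Integration.integrable_sum) auto
    show "integrable (omega T \<nu>) (\<lambda>x. Max ((\<lambda>k. \<Sum>t\<in>S. x t k) ` {1..K}))" by (rule max_int[OF \<nu> K S])
    fix x show "(\<Sum>t\<in>S. x t k0) \<le> Max ((\<lambda>k. \<Sum>t\<in>S. x t k) ` {1..K})"
      using k0 by (intro Max_ge) auto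
  qed
  finally show ?thesis .
qed

lemma pol_reward_mu:
  assumes v: "valid_policy K \<pi>"
  shows "pol_reward T \<pi> \<nu> S = (\<integral>x. (\<Sum>bs\<in>Ls K T. pmf (play \<pi> x T) bs * (\<Sum>t\<in>S. mu \<nu> t (bs ! (t - 1)))) \<partial>omega T \<nu>)"
  unfolding pol_reward_def expectation_play[OF v] ..

lemma pol_reward_batches:
  assumes \<nu>: "\<nu> \<in> envs K T VT" and v: "valid_policy K \<pi>" and pm: "policy_measurable T \<pi> \<nu>"
    and D: "\<Delta> \<ge> 1"
  shows "pol_reward T \<pi> \<nu> {1..T} = (\<Sum>j\<in>{1..nat \<lceil>real T / real \<Delta>\<rceil>}. pol_reward T \<pi> \<nu> (batch \<Delta> T j))"
proof -
  let ?J = "{1..nat \<lceil>real T / real \<Delta>\<rceil>}"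
  have "pol_reward T \<pi> \<nu> {1..T} = (\<integral>x. (\<Sum>bs\<in>Ls K T. pmf (play \<pi> x T) bs *
      (\<Sum>j\<in>?J. \<Sum>t\<in>batch \<Delta> T j. mu \<nu> t (bs ! (t - 1)))) \<partial>omega T \<nu>)"
  proof -
    have "\<And>bs. (\<Sum>t\<in>{1..T}. mu \<nu> t (bs ! (t - 1))) = (\<Sum>j\<in>?J. \<Sum>t\<in>batch \<Delta> T j. mu \<nu> t (bs ! (t - 1)))"
      by (rule sum_batches[OF D])
    then show ?thesis unfolding pol_reward_mu[OF v] by simp
  qed
  also have "\<dots> = (\<integral>x. (\<Sum>j\<in>?J. \<Sum>bs\<in>Ls K T. pmf (play \<pi> x T) bs *
      (\<Sum>t\<in>batch \<Delta> T j. mu \<nu> t (bs ! (t - 1)))) \<partial>omega T \<nu>)"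
  proof (rule Bochner_Integration.integral_cong[OF refl])
    fix x
    have "(\<Sum>bs\<in>Ls K T. pmf (play \<pi> x T) bs * (\<Sum>j\<in>?J. \<Sum>t\<in>batch \<Delta> T j. mu \<nu> t (bs ! (t - 1)))) =
       (\<Sum>bs\<in>Ls K T. \<Sum>j\<in>?J. pmf (play \<pi> x T) bs * (\<Sum>t\<in>batch \<Delta> T j. mu \<nu> t (bs ! (t - 1))))"
      by (simp only: sum_distrib_left)
    also have "\<dots> = (\<Sum>j\<in>?J. \<Sum>bs\<in>Ls K T. pmf (play \<pi> x T) bs * (\<Sum>t\<in>batch \<Delta> T j. mu \<nu> t (bs ! (t - 1))))"
      by (rule sum.swap)
    finally show "(\<Sum>bs\<in>Ls K T. pmf (play \<pi> x T) bs * (\<Sum>j\<in>?J. \<Sum>t\<in>batch \<Delta> T j. mu \<nu> t (bs ! (t - 1)))) =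
       (\<Sum>j\<in>?J. \<Sum>bs\<in>Ls K T. pmf (play \<pi> x T) bs * (\<Sum>t\<in>batch \<Delta> T j. mu \<nu> t (bs ! (t - 1))))" .
  qed
  also have "\<dots> = (\<Sum>j\<in>?J. \<integral>x. (\<Sum>bs\<in>Ls K T. pmf (play \<pi> x T) bs *
      (\<Sum>t\<in>batch \<Delta> T j. mu \<nu> t (bs ! (t - 1)))) \<partial>omega T \<nu>)"
    by (rule Bochner_Integration.integral_sum) (rule int_summu[OF \<nu> pm])
  also have "\<dots> = (\<Sum>j\<in>?J. pol_reward T \<pi> \<nu> (batch \<Delta> T j))"
    unfolding pol_reward_mu[OF v] ..
  finally show ?thesis .
qed



definition Dv :: "nat \<Rightarrow> (nat \<Rightarrow> (nat \<Rightarrow> real) measure) \<Rightarrow> nat \<Rightarrow> real" where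
  "Dv K \<nu> s = Max ((\<lambda>k. \<bar>mu \<nu> s k - mu \<nu> (s + 1) k\<bar>) ` {1..K})"

lemma Dv_ge:
  assumes "k \<in> {1..K}"
  shows "\<bar>mu \<nu> s k - mu \<nu> (s + 1) k\<bar> \<le> Dv K \<nu> s"
  unfolding Dv_def using assms by (intro Max_ge) auto

lemma Dv_nonneg: "K \<ge> 1 \<Longrightarrow> 0 \<le> Dv K \<nu> s"
  using Dv_ge[of 1 K \<nu> s] by (meson abs_ge_zero atLeastAtMost_iff le_refl order_trans)

lemma tele:
  assumes k: "k \<in> {1..K}" and t: "t0 \<le> t"
  shows "\<bar>mu \<nu> t k - mu \<nu> t0 k\<bar> \<le> (\<Sum>s\<in>{t0..<t}. Dv K \<nu> s)"
  using t
proof (induction t rule: nat_induct_at_least)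
  case base then show ?case by simp
next
  case (Suc n)
  have "\<bar>mu \<nu> (Suc n) k - mu \<nu> t0 k\<bar> \<le> \<bar>mu \<nu> n k - mu \<nu> t0 k\<bar> + \<bar>mu \<nu> n k - mu \<nu> (n + 1) k\<bar>"
    by simp
  also have "\<dots> \<le> (\<Sum>s\<in>{t0..<n}. Dv K \<nu> s) + Dv K \<nu> n" using Suc.IH Dv_ge[OF k] by (intro add_mono) auto
  also have "\<dots> = (\<Sum>s\<in>{t0..<Suc n}. Dv K \<nu> s)" using Suc.hyps by simp
  finally show ?case .
qed

definition Vb :: "nat \<Rightarrow> nat \<Rightarrow> nat \<Rightarrow> (nat \<Rightarrow> (nat \<Rightarrow> real) measure) \<Rightarrow> nat \<Rightarrow> real" where
  "Vb K T \<Delta> \<nu> j = (\<Sum>s\<in>{s \<in> {1..T - 1}. bidx \<Delta> s = j}. Dv K \<nu> s)"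

lemma Vb_sum:
  assumes \<nu>: "\<nu> \<in> envs K T VT" and D: "\<Delta> \<ge> 1"
  shows "(\<Sum>j\<in>{1..nat \<lceil>real T / real \<Delta>\<rceil>}. Vb K T \<Delta> \<nu> j) \<le> VT"
proof -
  have "(\<Sum>j\<in>{1..nat \<lceil>real T / real \<Delta>\<rceil>}. Vb K T \<Delta> \<nu> j) = (\<Sum>s\<in>{1..T - 1}. Dv K \<nu> s)"
    unfolding Vb_def using bidx_range[OF D, of _ T] by (intro sum.group) auto
  also have "\<dots> \<le> VT" using \<nu> unfolding envs_def Vset_def Dv_def by auto
  finally show ?thesis .
qed

lemma exp_max_empty:
  assumes "K \<ge> 1"
  shows "exp_max K T \<nu> {} = 0"
  unfolding exp_max_def using assms by simp

lemma batch_var: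
  assumes \<nu>: "\<nu> \<in> envs K T VT" and K: "K \<ge> 1" and D: "\<Delta> \<ge> 1" and j: "j \<ge> 1"
  shows "(\<Sum>t\<in>batch \<Delta> T j. mustar K \<nu> t) - exp_max K T \<nu> (batch \<Delta> T j) \<le> 2 * real \<Delta> * Vb K T \<Delta> \<nu> j"
proof (cases "batch \<Delta> T j = {}")
  case True
  have "0 \<le> Vb K T \<Delta> \<nu> j" unfolding Vb_def using Dv_nonneg[OF K] by (intro sum_nonneg) auto
  then show ?thesis using True exp_max_empty[OF K] by simp
next
  case False
  define t0 where "t0 = (j - 1) * \<Delta> + 1"
  have t0b: "t0 \<in> batch \<Delta> T j" using False unfolding batch_def t0_def by auto
  have tge: "t0 \<le> t" if "t \<in> batch \<Delta> T j" for t using that unfolding batch_def t0_def by auto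
  have fin: "finite ((\<lambda>k. mu \<nu> t0 k) ` {1..K})" "(\<lambda>k. mu \<nu> t0 k) ` {1..K} \<noteq> {}" using K by auto
  obtain k0 where k0: "k0 \<in> {1..K}" and mk0: "mustar K \<nu> t0 = mu \<nu> t0 k0"
    using Max_in[OF fin] unfolding mustar_def by auto
  define V where "V = Vb K T \<Delta> \<nu> j"
  have sV: "(\<Sum>s\<in>{t0..<t}. Dv K \<nu> s) \<le> V" if t: "t \<in> batch \<Delta> T j" for t
    unfolding V_def Vb_def
  proof (rule sum_mono2)
    show "finite {s \<in> {1..T - 1}. bidx \<Delta> s = j}" by simp
    show "{t0..<t} \<subseteq> {s \<in> {1..T - 1}. bidx \<Delta> s = j}"
    proof
      fix s assume s: "s \<in> {t0..<t}"
      then have "s \<in> batch \<Delta> T j" using t unfolding batch_def t0_def by auto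
      then have "s \<in> {1..T} \<and> bidx \<Delta> s = j" using batch_eq[OF D j] by auto
      moreover have "s \<le> T - 1" using s t batch_sub by fastforce
      ultimately show "s \<in> {s \<in> {1..T - 1}. bidx \<Delta> s = j}" by auto
    qed
    show "\<And>b. b \<in> {s \<in> {1..T - 1}. bidx \<Delta> s = j} - {t0..<t} \<Longrightarrow> 0 \<le> Dv K \<nu> b"
      using Dv_nonneg[OF K] by auto
  qed
  have pt: "mustar K \<nu> t - mu \<nu> t k0 \<le> 2 * V" if t: "t \<in> batch \<Delta> T j" for t
  proof -
    have fin2: "finite ((\<lambda>k. mu \<nu> t k) ` {1..K})" "(\<lambda>k. mu \<nu> t k) ` {1..K} \<noteq> {}" using K by auto
    obtain k1 where k1: "k1 \<in> {1..K}" and mk1: "mustar K \<nu> t = mu \<nu> t k1"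
      using Max_in[OF fin2] unfolding mustar_def by auto
    have d1: "\<bar>mu \<nu> t k1 - mu \<nu> t0 k1\<bar> \<le> V" using tele[where \<nu>=\<nu>, OF k1 tge[OF t]] sV[OF t] by linarith
    have d0: "\<bar>mu \<nu> t k0 - mu \<nu> t0 k0\<bar> \<le> V" using tele[where \<nu>=\<nu>, OF k0 tge[OF t]] sV[OF t] by linarith
    have "mu \<nu> t0 k1 \<le> mustar K \<nu> t0" unfolding mustar_def using k1 by (intro Max_ge) auto
    then show ?thesis using d1 d0 mk0 mk1 by linarith
  qed
  have "(\<Sum>t\<in>batch \<Delta> T j. mustar K \<nu> t) - exp_max K T \<nu> (batch \<Delta> T j)
      \<le> (\<Sum>t\<in>batch \<Delta> T j. mustar K \<nu> t) - (\<Sum>t\<in>batch \<Delta> T j. mu \<nu> t k0)"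
    using exp_max_ge[OF \<nu> batch_sub k0] by simp
  also have "\<dots> = (\<Sum>t\<in>batch \<Delta> T j. mustar K \<nu> t - mu \<nu> t k0)" by (simp add: sum_subtractf)
  also have "\<dots> \<le> (\<Sum>t\<in>batch \<Delta> T j. 2 * V)" using pt by (intro sum_mono) auto
  also have "\<dots> = real (card (batch \<Delta> T j)) * (2 * V)" by simp
  also have "\<dots> \<le> real \<Delta> * (2 * V)"
  proof (rule mult_right_mono)
    show "real (card (batch \<Delta> T j)) \<le> real \<Delta>" using card_batch by simp
    have "0 \<le> V" unfolding V_def Vb_def using Dv_nonneg[OF K] by (intro sum_nonneg) auto
    then show "0 \<le> 2 * V" by simp
  qed
  finally show ?thesis unfolding V_def by simp
qed



lemma partA:
  assumes K: "K \<ge> 1" and D: "\<Delta> \<ge> 1" and v: "valid_policy K \<pi>"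
    and pm: "\<forall>\<nu>\<in>envs K T VT. policy_measurable T \<pi> \<nu>"
    and hyp: "\<forall>\<nu>\<in>envs K T VT. \<forall>j\<in>{1..nat \<lceil>real T / real \<Delta>\<rceil>}.
                 exp_max K T \<nu> (batch \<Delta> T j) - pol_reward T \<pi> \<nu> (batch \<Delta> T j) \<le> B"
  shows "regret K T VT \<pi> \<le> ereal (real_of_int \<lceil>real T / real \<Delta>\<rceil> * B + 2 * real \<Delta> * VT)"
  unfolding regret_def
proof (rule SUP_least)
  fix \<nu> assume \<nu>: "\<nu> \<in> envs K T VT"
  let ?J = "{1..nat \<lceil>real T / real \<Delta>\<rceil>}"
  have "(\<Sum>t = 1..T. mustar K \<nu> t) - pol_reward T \<pi> \<nu> {1..T}
      = (\<Sum>j\<in>?J. (\<Sum>t\<in>batch \<Delta> T j. mustar K \<nu> t) - pol_reward T \<pi> \<nu> (batch \<Delta> T j))"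
    unfolding pol_reward_batches[OF \<nu> v pm[rule_format, OF \<nu>] D] sum_subtractf
    using sum_batches[OF D, where T=T and f="mustar K \<nu>"] by simp
  also have "\<dots> \<le> (\<Sum>j\<in>?J. 2 * real \<Delta> * Vb K T \<Delta> \<nu> j + B)"
  proof (rule sum_mono)
    fix j assume j: "j \<in> ?J"
    have "(\<Sum>t\<in>batch \<Delta> T j. mustar K \<nu> t) - exp_max K T \<nu> (batch \<Delta> T j) \<le> 2 * real \<Delta> * Vb K T \<Delta> \<nu> j"
      using batch_var[OF \<nu> K D] j by auto
    moreover have "exp_max K T \<nu> (batch \<Delta> T j) - pol_reward T \<pi> \<nu> (batch \<Delta> T j) \<le> B"
      using hyp \<nu> j by blast
    ultimately show "(\<Sum>t\<in>batch \<Delta> T j. mustar K \<nu> t) - pol_reward T \<pi> \<nu> (batch \<Delta> T j)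
        \<le> 2 * real \<Delta> * Vb K T \<Delta> \<nu> j + B" by linarith
  qed
  also have "\<dots> = 2 * real \<Delta> * (\<Sum>j\<in>?J. Vb K T \<Delta> \<nu> j) + real (nat \<lceil>real T / real \<Delta>\<rceil>) * B"
    by (simp add: sum.distrib sum_distrib_left)
  also have "\<dots> \<le> 2 * real \<Delta> * VT + real (nat \<lceil>real T / real \<Delta>\<rceil>) * B"
    using Vb_sum[OF \<nu> D] by (intro add_right_mono mult_left_mono) auto
  also have "real (nat \<lceil>real T / real \<Delta>\<rceil>) = real_of_int \<lceil>real T / real \<Delta>\<rceil>"
  proof -
    have "0 \<le> real T / real \<Delta>" by simp
    then have "0 \<le> \<lceil>real T / real \<Delta>\<rceil>" by (metis ceiling_mono ceiling_zero)
    then show ?thesis by simp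
  qed
  finally show "ereal ((\<Sum>t = 1..T. mustar K \<nu> t) - pol_reward T \<pi> \<nu> {1..T})
      \<le> ereal (real_of_int \<lceil>real T / real \<Delta>\<rceil> * B + 2 * real \<Delta> * VT)" by simp
qed



lemma pol_reward_empty: "pol_reward T \<pi> \<nu> {} = 0"
  unfolding pol_reward_def by simp

lemma gam_nonneg:
  assumes "K \<ge> 1"
  shows "0 \<le> real K * ln (real K) / ((exp 1 - 1) * real \<Delta>)"
proof -
  have "0 \<le> exp 1 - (1::real)" using exp_ge_add_one_self[of "1::real"] by simp
  then show ?thesis using assms by (intro divide_nonneg_nonneg mult_nonneg_nonneg) auto
qed

lemma exp3_hyp:
  assumes K: "K \<ge> 2" and D: "\<Delta> \<ge> 1" and \<nu>: "\<nu> \<in> envs K T VT" and j: "j \<ge> 1"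
  defines "\<gamma> \<equiv> min 1 (sqrt (real K * ln (real K) / ((exp 1 - 1) * real \<Delta>)))"
  shows "exp_max K T \<nu> (batch \<Delta> T j) - pol_reward T (exp3_restart K \<Delta> \<gamma>) \<nu> (batch \<Delta> T j)
     \<le> 2 * sqrt (exp 1 - 1) * sqrt (real \<Delta> * real K * ln (real K))"
proof -
  let ?\<pi> = "exp3_restart K \<Delta> \<gamma>"
  let ?B = "2 * sqrt (exp 1 - 1) * sqrt (real \<Delta> * real K * ln (real K))"
  have K1: "K \<ge> 1" using K by simp
  have g: "0 \<le> \<gamma>" "\<gamma> \<le> 1" unfolding \<gamma>_def using gam_nonneg[OF K1, of \<Delta>] by auto
  have v: "valid_policy K ?\<pi>" by (rule valid_exp3[OF K1 g])
  have pm: "policy_measurable T ?\<pi> \<nu>" by (rule exp3_measurable[OF \<nu> K1 g])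
  interpret P: prob_space "omega T \<nu>" by (rule prob_omega[OF \<nu>])
  have B0: "0 \<le> ?B" using K by (simp add: exp_ge_add_one_self)
  define s0 where "s0 = (j - 1) * \<Delta>"
  define e where "e = min (j * \<Delta>) T"
  have bS: "batch \<Delta> T j = {s0+1..e}" unfolding batch_def s0_def e_def by auto
  show ?thesis
  proof (cases "s0 \<le> e")
    case False
    then have "batch \<Delta> T j = {}" unfolding bS by auto
    then show ?thesis using exp_max_empty[OF K1] pol_reward_empty B0 by simp
  next
    case True
    have jD: "j * \<Delta> = s0 + \<Delta>" unfolding s0_def using j by (cases j) auto
    have e1: "e \<le> s0 + \<Delta>" "e \<le> T" unfolding e_def using jD by auto
    let ?S = "{s0+1..e}"
    have ST: "?S \<subseteq> {1..T}" using e1 by auto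
    define Mx where "Mx x = Max ((\<lambda>k. \<Sum>t\<in>?S. x t k) ` {1..K})" for x :: "nat \<Rightarrow> nat \<Rightarrow> real"
    define R where "R x = (\<Sum>bs\<in>Ls K T. pmf (play ?\<pi> x T) bs * (\<Sum>t\<in>?S. x t (bs ! (t - 1))))" for x
    have iM: "integrable (omega T \<nu>) Mx" unfolding Mx_def by (rule max_int[OF \<nu> K1 ST])
    have iR: "integrable (omega T \<nu>) R"
    proof -
      have Req: "R = (\<lambda>x. \<Sum>bs\<in>Ls K T. \<Sum>t\<in>?S. pmf (play ?\<pi> x T) bs * x t (bs ! (t - 1)))"
        unfolding R_def by (simp add: sum_distrib_left)
      have "integrable (omega T \<nu>) (\<lambda>x. \<Sum>bs\<in>Ls K T. \<Sum>t\<in>?S. pmf (play ?\<pi> x T) bs * x t (bs ! (t - 1)))"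
      proof (intro Bochner_Integration.integrable_sum)
        fix bs t assume bs: "bs \<in> Ls K T" and t: "t \<in> ?S"
        have tt: "t \<in> {1..T}" using t ST by auto
        have "bs ! (t - 1) \<in> {1..K}" using Ls_nth[OF bs] tt by auto
        then show "integrable (omega T \<nu>) (\<lambda>x. pmf (play ?\<pi> x T) bs * x t (bs ! (t - 1)))"
          by (rule int_px[OF \<nu> pm tt])
      qed
      then show ?thesis unfolding Req .
    qed
    have pw: "Mx x - R x \<le> ?B" if x: "x \<in> space (omega T \<nu>)" for x
      unfolding Mx_def R_def \<gamma>_def
    proof (rule exp3_batch_bound[OF K D s0_def True e1(1) e1(2)])
      fix t k assume "t \<in> {s0 + 1..e}" "k \<in> {1..K}"
      then show "0 \<le> x t k \<and> x t k \<le> 1" using space_omega(1)[OF \<nu> x] ST by auto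
    qed
    have "exp_max K T \<nu> (batch \<Delta> T j) - pol_reward T ?\<pi> \<nu> (batch \<Delta> T j) = (\<integral>x. Mx x \<partial>omega T \<nu>) - (\<integral>x. R x \<partial>omega T \<nu>)"
      unfolding bS exp_max_def pol_reward_x[OF \<nu> v pm ST] Mx_def R_def ..
    also have "\<dots> = (\<integral>x. Mx x - R x \<partial>omega T \<nu>)" using iM iR by simp
    also have "\<dots> \<le> (\<integral>x. ?B \<partial>omega T \<nu>)"
      using iM iR pw by (intro integral_mono) auto
    also have "\<dots> = ?B" using P.prob_space by simp
    finally show ?thesis .
  qed
qed

theorem mainTheorem4:
  fixes T K \<Delta> :: nat and VT :: real
  assumes "T \<ge> 1" and "K \<ge> 2" and "VT > 0" and "\<Delta> \<in> {1..T}"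
  shows "(\<forall>(\<pi> :: nat \<Rightarrow> (nat \<times> real) list \<Rightarrow> nat pmf) (B :: real).
            valid_policy K \<pi>
          \<longrightarrow> (\<forall>\<nu>\<in>envs K T VT. policy_measurable T \<pi> \<nu>)
          \<longrightarrow> (\<forall>\<nu>\<in>envs K T VT. \<forall>j\<in>{1..nat \<lceil>real T / real \<Delta>\<rceil>}.
                 exp_max K T \<nu> (batch \<Delta> T j) - pol_reward T \<pi> \<nu> (batch \<Delta> T j) \<le> B)
          \<longrightarrow> regret K T VT \<pi> \<le> ereal (real_of_int \<lceil>real T / real \<Delta>\<rceil> * B + 2 * real \<Delta> * VT))
       \<and> regret K T VT
           (exp3_restart K \<Delta> (min 1 (sqrt (real K * ln (real K) / ((exp 1 - 1) * real \<Delta>)))))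
         \<le> ereal ((real T / real \<Delta> + 1) * (2 * sqrt (exp 1 - 1) * sqrt (real \<Delta> * real K * ln (real K)))
                  + 2 * real \<Delta> * VT)"
proof
  have K1: "K \<ge> 1" using assms by simp
  have D: "\<Delta> \<ge> 1" using assms by simp
  show "\<forall>(\<pi> :: nat \<Rightarrow> (nat \<times> real) list \<Rightarrow> nat pmf) (B :: real).
            valid_policy K \<pi>
          \<longrightarrow> (\<forall>\<nu>\<in>envs K T VT. policy_measurable T \<pi> \<nu>)
          \<longrightarrow> (\<forall>\<nu>\<in>envs K T VT. \<forall>j\<in>{1..nat \<lceil>real T / real \<Delta>\<rceil>}.
                 exp_max K T \<nu> (batch \<Delta> T j) - pol_reward T \<pi> \<nu> (batch \<Delta> T j) \<le> B)
          \<longrightarrow> regret K T VT \<pi> \<le> ereal (real_of_int \<lceil>real T / real \<Delta>\<rceil> * B + 2 * real \<Delta> * VT)"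
    using partA[OF K1 D] by blast
  let ?\<gamma> = "min 1 (sqrt (real K * ln (real K) / ((exp 1 - 1) * real \<Delta>)))"
  let ?B = "2 * sqrt (exp 1 - 1) * sqrt (real \<Delta> * real K * ln (real K))"
  have g: "0 \<le> ?\<gamma>" "?\<gamma> \<le> 1" using gam_nonneg[OF K1, of \<Delta>] by auto
  have "regret K T VT (exp3_restart K \<Delta> ?\<gamma>) \<le> ereal (real_of_int \<lceil>real T / real \<Delta>\<rceil> * ?B + 2 * real \<Delta> * VT)"
  proof (rule partA[OF K1 D valid_exp3[OF K1 g]])
    show "\<forall>\<nu>\<in>envs K T VT. policy_measurable T (exp3_restart K \<Delta> ?\<gamma>) \<nu>"
      using exp3_measurable[OF _ K1 g] by blast
    show "\<forall>\<nu>\<in>envs K T VT. \<forall>j\<in>{1..nat \<lceil>real T / real \<Delta>\<rceil>}.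
      exp_max K T \<nu> (batch \<Delta> T j) - pol_reward T (exp3_restart K \<Delta> ?\<gamma>) \<nu> (batch \<Delta> T j) \<le> ?B"
      using exp3_hyp[OF assms(2) D] by auto
  qed
  also have "\<dots> \<le> ereal ((real T / real \<Delta> + 1) * ?B + 2 * real \<Delta> * VT)"
  proof -
    have "real_of_int \<lceil>real T / real \<Delta>\<rceil> \<le> real T / real \<Delta> + 1" by linarith
    moreover have "0 \<le> ?B" using assms(2) by (simp add: exp_ge_add_one_self)
    ultimately show ?thesis by (simp add: mult_right_mono)
  qed
  finally show "regret K T VT (exp3_restart K \<Delta> ?\<gamma>) \<le> ereal ((real T / real \<Delta> + 1) * ?B + 2 * real \<Delta> * VT)" .
qed


end
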